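(* In the setting below, for every integer $n\ge1$, every $t\in[0,1]$ and every function $f\ge0$ on $(\Sigma_N)^n$, \[\nu_t(f)\le\exp(6n^2\beta^2S^4)\,\nu_1(f).\]
   Context: Fix $S\ge1$, $\Sigma=\{0,\pm1,\dots,\pm S\}$, $\Sigma_N=\Sigma^N$, $\beta\ge0$, $D\in\mathbb{R}$, $h\ge 0$, and assume $\beta$ is small enough that the system $p=\mathbb{E}\big[\frac{\sum_{\gamma=1}^{S}\gamma^2\, 2\cosh[\gamma(\sqrt{q}\beta X+h)]e^{\gamma^2[D+\frac{\beta^2}{2}(p-q)]}}{1+\sum_{\gamma=1}^{S}2\cosh[\gamma(\sqrt{q}\beta X+h)]e^{\gamma^2[D+\frac{\beta^2}{2}(p-q)]}}\big]$, $q=\mathbb{E}\big[\big(\frac{\sum_{\gamma=1}^{S}\gamma\, 2\sinh[\gamma(\sqrt{q}\beta X+h)]e^{\gamma^2[D+\frac{\beta^2}{2}(p-q)]}}{1+\sum_{\gamma=1}^{S}2\cosh[\gamma(\sqrt{q}\beta X+h)]e^{\gamma^2[D+\frac{\beta^2}{2}(p-q)]}}\big)^2\big]$ ($X$ standard Gaussian) has a unique solution $(p,q)$. Let $(g_{ij})_{i<j}$ be i.i.d. standard Gaussians and $z$ an independent standard Gaussian. For $\sigma\in\Sigma_N$, $\rho=(\sigma_1,\dots,\sigma_{N-1})$, $H_{N-1}(\rho)=\frac{\beta}{\sqrt N}\sum_{1\le i<j\le N-1}g_{ij}\sigma_i\sigma_j+D\sum_{i\le N-1}\sigma_i^2+h\sum_{i\le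 N-1}\sigma_i$, and for $t\in[0,1]$ $H_t(\sigma)=H_{N-1}(\rho)+\sigma_N\big[\sqrt t\frac{\beta}{\sqrt N}\sum_{i<N}g_{iN}\sigma_i+\sqrt{1-t}\,\beta z\sqrt q\big]+(1-t)\frac{\beta^2}{2}(p-q)\sigma_N^2+D\sigma_N^2+h\sigma_N$. Let $\langle\cdot\rangle_t$ be the Gibbs average for $H_t$, extended to functions of $n$ replicas $(\sigma^1,\dots,\sigma^n)$ (i.i.d. samples given the disorder), and $\nu_t(f)=\mathbb{E}\langle f\rangle_t$ with $\mathbb{E}$ over $(g_{ij})$ and $z$. *)

theory Defs
  imports "HOL-Probability.Probability"
begin

definition std_gauss :: "real measure" where
  "std_gauss = density lborel std_normal_density"

definition spins :: "nat \<Rightarrow> int set" where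
  "spins S = {- int S .. int S}"

definition configs :: "nat \<Rightarrow> nat \<Rightarrow> (nat \<Rightarrow> int) set" where
  "configs S N = PiE {1..N} (\<lambda>_. spins S)"

definition replicas :: "nat \<Rightarrow> nat \<Rightarrow> nat \<Rightarrow> (nat \<Rightarrow> nat \<Rightarrow> int) set" where
  "replicas S N n = PiE {1..n} (\<lambda>_. configs S N)"

text \<open>Disorder: Some (i,j) is g_ij for 1 <= i < j <= N, None is z.\<close>
definition pairs :: "nat \<Rightarrow> (nat \<times> nat) set" where
  "pairs N = {(i, j). 1 \<le> i \<and> i < j \<and> j \<le> N}"

definition disorder :: "nat \<Rightarrow> ((nat \<times> nat) option \<Rightarrow> real) measure" where
  "disorder N = PiM (insert None (Some ` pairs N)) (\<lambda>_. std_gauss)"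

definition H_t ::
  "real \<Rightarrow> real \<Rightarrow> real \<Rightarrow> real \<Rightarrow> real \<Rightarrow> nat \<Rightarrow> real \<Rightarrow>
   ((nat \<times> nat) option \<Rightarrow> real) \<Rightarrow> (nat \<Rightarrow> int) \<Rightarrow> real" where
  "H_t \<beta> D h p q N t g \<sigma> =
     (\<beta> / sqrt N) * (\<Sum>(i, j)\<in>pairs (N - 1). g (Some (i, j)) * \<sigma> i * \<sigma> j)
     + D * (\<Sum>i\<in>{1..N - 1}. (\<sigma> i)\<^sup>2) + h * (\<Sum>i\<in>{1..N - 1}. \<sigma> i)
     + \<sigma> N * (sqrt t * (\<beta> / sqrt N) * (\<Sum>i\<in>{1..<N}. g (Some (i, N)) * \<sigma> i)
               + sqrt (1 - t) * \<beta> * g None * sqrt q)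
     + (1 - t) * (\<beta>\<^sup>2 / 2) * (p - q) * (\<sigma> N)\<^sup>2 + D * (\<sigma> N)\<^sup>2 + h * \<sigma> N"

definition gibbs_avg ::
  "(nat \<Rightarrow> int) set \<Rightarrow> ((nat \<Rightarrow> int) \<Rightarrow> real) \<Rightarrow> nat \<Rightarrow> ((nat \<Rightarrow> nat \<Rightarrow> int) \<Rightarrow> real) \<Rightarrow> real" where
  "gibbs_avg C H n f =
     (\<Sum>\<sigma>s\<in>PiE {1..n} (\<lambda>_. C). f \<sigma>s * (\<Prod>l\<in>{1..n}. exp (H (\<sigma>s l))))
     / (\<Sum>\<sigma>\<in>C. exp (H \<sigma>)) ^ n"

definition nu_t ::
  "nat \<Rightarrow> real \<Rightarrow> real \<Rightarrow> real \<Rightarrow> real \<Rightarrow> real \<Rightarrow> nat \<Rightarrow> real \<Rightarrow> nat \<Rightarrow>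
   ((nat \<Rightarrow> nat \<Rightarrow> int) \<Rightarrow> real) \<Rightarrow> real" where
  "nu_t S \<beta> D h p q N t n f =
     integral\<^sup>L (disorder N) (\<lambda>g. gibbs_avg (configs S N) (H_t \<beta> D h p q N t g) n f)"

definition fp_denom :: "nat \<Rightarrow> real \<Rightarrow> real \<Rightarrow> real \<Rightarrow> real \<Rightarrow> real \<Rightarrow> real \<Rightarrow> real" where
  "fp_denom S \<beta> D h p q x =
     1 + (\<Sum>\<gamma>\<in>{1..S}. 2 * cosh (real \<gamma> * (sqrt q * \<beta> * x + h))
                         * exp ((real \<gamma>)\<^sup>2 * (D + \<beta>\<^sup>2 / 2 * (p - q))))"

definition fp_system :: "nat \<Rightarrow> real \<Rightarrow> real \<Rightarrow> real \<Rightarrow> real \<Rightarrow> real \<Rightarrow> bool" where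
  "fp_system S \<beta> D h p q \<longleftrightarrow>
     p = integral\<^sup>L std_gauss (\<lambda>x.
           (\<Sum>\<gamma>\<in>{1..S}. (real \<gamma>)\<^sup>2 * 2 * cosh (real \<gamma> * (sqrt q * \<beta> * x + h))
                         * exp ((real \<gamma>)\<^sup>2 * (D + \<beta>\<^sup>2 / 2 * (p - q))))
           / fp_denom S \<beta> D h p q x)
   \<and> q = integral\<^sup>L std_gauss (\<lambda>x.
           ((\<Sum>\<gamma>\<in>{1..S}. real \<gamma> * 2 * sinh (real \<gamma> * (sqrt q * \<beta> * x + h))
                         * exp ((real \<gamma>)\<^sup>2 * (D + \<beta>\<^sup>2 / 2 * (p - q))))
           / fp_denom S \<beta> D h p q x)\<^sup>2)"

end

theory Submission
  imports Defs "HOL-Real_Asymp.Real_Asymp"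
begin

definition gav :: "'s set \<Rightarrow> ('s \<Rightarrow> real) \<Rightarrow> ('s \<Rightarrow> real) \<Rightarrow> real" where
  "gav P E h = (\<Sum>s\<in>P. h s * exp (E s)) / (\<Sum>s\<in>P. exp (E s))"

definition cov :: "'s set \<Rightarrow> ('s \<Rightarrow> real) \<Rightarrow> ('s \<Rightarrow> real) \<Rightarrow> ('s \<Rightarrow> real) \<Rightarrow> real" where
  "cov P E h k = gav P E (\<lambda>s. h s * k s) - gav P E h * gav P E k"

definition Vf :: "'s set \<Rightarrow> ('s \<Rightarrow> real) \<Rightarrow> ('s \<Rightarrow> real) \<Rightarrow> ('s \<Rightarrow> real) \<Rightarrow> real" where
  "Vf P E f A = cov P E (\<lambda>s. f s * A s) A - cov P E f A * gav P E A - gav P E f * cov P E A A"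

lemma Z_pos: "finite P \<Longrightarrow> P \<noteq> {} \<Longrightarrow> 0 < (\<Sum>s\<in>P. exp (E s :: real))"
  by (rule sum_pos) auto

lemma gav_add: "gav P E (\<lambda>s. h s + k s) = gav P E h + gav P E k"
  by (simp add: gav_def distrib_right sum.distrib add_divide_distrib)

lemma gav_diff: "gav P E (\<lambda>s. h s - k s) = gav P E h - gav P E k"
  by (simp add: gav_def left_diff_distrib sum_subtractf diff_divide_distrib)

lemma gav_cmult: "gav P E (\<lambda>s. c * h s) = c * gav P E h"
  by (simp add: gav_def sum_distrib_left mult.assoc)

lemma gav_multc: "gav P E (\<lambda>s. h s * c) = gav P E h * c"
  using gav_cmult[of P E c h] by (simp add: mult.commute)

lemma gav_const: "finite P \<Longrightarrow> P \<noteq> {} \<Longrightarrow> gav P E (\<lambda>s. c) = c"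
  using Z_pos[of P E] by (simp add: gav_def sum_distrib_left[symmetric])

lemma gav_sum: "gav P E (\<lambda>s. \<Sum>k\<in>K. h k s) = (\<Sum>k\<in>K. gav P E (h k))"
  unfolding gav_def by (simp add: sum_distrib_right sum_divide_distrib[symmetric] sum.swap[of _ P])

lemma gav_cong: "(\<And>s. s \<in> P \<Longrightarrow> h s = k s) \<Longrightarrow> gav P E h = gav P E k"
  by (simp add: gav_def)

lemma gav_mono:
  assumes "finite P" "P \<noteq> {}" "\<And>s. s \<in> P \<Longrightarrow> h s \<le> k s"
  shows "gav P E h \<le> gav P E k"
  unfolding gav_def
  by (intro divide_right_mono sum_mono mult_right_mono) (use assms Z_pos[of P E] in auto)

lemma gav_nonneg:
  assumes "finite P" "P \<noteq> {}" "\<And>s. s \<in> P \<Longrightarrow> 0 \<le> h s"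
  shows "0 \<le> gav P E h"
  using gav_mono[of P "\<lambda>s. 0" h E] assms gav_const[of P E 0] by simp

lemma gav_le_sum:
  assumes "finite P" "P \<noteq> {}" "\<And>s. s \<in> P \<Longrightarrow> 0 \<le> f s"
  shows "gav P E f \<le> (\<Sum>s\<in>P. f s)"
proof -
  have "gav P E f \<le> gav P E (\<lambda>_. \<Sum>s\<in>P. f s)"
    using assms by (intro gav_mono) (auto intro: member_le_sum)
  then show ?thesis using gav_const assms by metis
qed

lemma gav_bound_mult:
  assumes "finite P" "P \<noteq> {}" "\<And>s. s \<in> P \<Longrightarrow> 0 \<le> f s" "\<And>s. s \<in> P \<Longrightarrow> h s \<le> M"
  shows "gav P E (\<lambda>s. f s * h s) \<le> M * gav P E f"
proof -
  have "gav P E (\<lambda>s. f s * h s) \<le> gav P E (\<lambda>s. M * f s)"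
  proof (rule gav_mono[OF assms(1,2)])
    fix s assume "s \<in> P"
    then have "f s * h s \<le> f s * M" using assms by (intro mult_left_mono) auto
    then show "f s * h s \<le> M * f s" by (simp add: mult.commute)
  qed
  then show ?thesis by (simp add: gav_cmult)
qed

lemma gav_bound_mult_lower:
  assumes "finite P" "P \<noteq> {}" "\<And>s. s \<in> P \<Longrightarrow> 0 \<le> f s" "\<And>s. s \<in> P \<Longrightarrow> M \<le> h s"
  shows "M * gav P E f \<le> gav P E (\<lambda>s. f s * h s)"
proof -
  have "gav P E (\<lambda>s. M * f s) \<le> gav P E (\<lambda>s. f s * h s)"
  proof (rule gav_mono[OF assms(1,2)])
    fix s assume "s \<in> P"
    then have "f s * M \<le> f s * h s" using assms by (intro mult_left_mono) auto
    then show "M * f s \<le> f s * h s" by (simp add: mult.commute)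
  qed
  then show ?thesis by (simp add: gav_cmult)
qed

lemma gav_abs_bound:
  assumes "finite P" "P \<noteq> {}" "\<And>s. s \<in> P \<Longrightarrow> \<bar>h s\<bar> \<le> M"
  shows "\<bar>gav P E h\<bar> \<le> M"
proof -
  have "gav P E h \<le> gav P E (\<lambda>_. M)" "gav P E (\<lambda>_. - M) \<le> gav P E h"
    using assms by (auto intro!: gav_mono simp: abs_le_iff) (metis abs_le_iff assms(3) minus_le_iff)
  then show ?thesis using gav_const[OF assms(1,2)] by (simp add: abs_le_iff) 
qed

lemma gav_deriv:
  assumes "finite P" "P \<noteq> {}"
    and d: "\<And>s. s \<in> P \<Longrightarrow> ((\<lambda>y. E y s) has_real_derivative E' s) (at y0 within X)"
  shows "((\<lambda>y. gav P (E y) h) has_real_derivative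
           (gav P (E y0) (\<lambda>s. h s * E' s) - gav P (E y0) h * gav P (E y0) E')) (at y0 within X)"
proof -
  let ?Z = "\<Sum>s\<in>P. exp (E y0 s)"
  have Z: "?Z > 0" using Z_pos assms by blast
  have dn: "((\<lambda>y. \<Sum>s\<in>P. h s * exp (E y s)) has_real_derivative (\<Sum>s\<in>P. h s * (exp (E y0 s) * E' s))) (at y0 within X)"
    by (intro DERIV_sum DERIV_cmult DERIV_chain2[OF DERIV_exp] d)
  have dz: "((\<lambda>y. \<Sum>s\<in>P. exp (E y s)) has_real_derivative (\<Sum>s\<in>P. exp (E y0 s) * E' s)) (at y0 within X)"
    by (intro DERIV_sum DERIV_chain2[OF DERIV_exp] d)
  have "((\<lambda>y. gav P (E y) h) has_real_derivative
     ((\<Sum>s\<in>P. h s * (exp (E y0 s) * E' s)) * ?Z - (\<Sum>s\<in>P. h s * exp (E y0 s)) * (\<Sum>s\<in>P. exp (E y0 s) * E' s)) / (?Z * ?Z)) (at y0 within X)"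
    unfolding gav_def using Z by (intro DERIV_divide dn dz) auto
  moreover have "((\<Sum>s\<in>P. h s * (exp (E y0 s) * E' s)) * ?Z - (\<Sum>s\<in>P. h s * exp (E y0 s)) * (\<Sum>s\<in>P. exp (E y0 s) * E' s)) / (?Z * ?Z)
     = gav P (E y0) (\<lambda>s. h s * E' s) - gav P (E y0) h * gav P (E y0) E'"
  proof -
    have q: "(a * Z - b * c) / (Z * Z) = a / Z - (b / Z) * (c / Z)" if "Z \<noteq> 0" for a b c Z :: real
      using that by (simp add: diff_divide_distrib)
    have s1: "(\<Sum>s\<in>P. h s * (exp (E y0 s) * E' s)) = (\<Sum>s\<in>P. (h s * E' s) * exp (E y0 s))"
      by (simp add: mult_ac)
    have s2: "(\<Sum>s\<in>P. exp (E y0 s) * E' s) = (\<Sum>s\<in>P. E' s * exp (E y0 s))"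
      by (simp add: mult_ac)
    show ?thesis unfolding gav_def q[OF less_imp_neq[OF Z, symmetric]] s1 s2 ..
  qed
  ultimately show ?thesis by simp
qed

lemma Vf_alt:
  assumes "finite P" "P \<noteq> {}"
  shows "Vf P E f A = gav P E (\<lambda>s. f s * (A s - gav P E A)^2) - gav P E f * gav P E (\<lambda>s. (A s - gav P E A)^2)"
proof -
  let ?m = "gav P E A"
  have e1: "gav P E (\<lambda>s. f s * (A s - ?m)^2) = gav P E (\<lambda>s. f s * A s * A s) - 2 * ?m * gav P E (\<lambda>s. f s * A s) + ?m^2 * gav P E f"
  proof -
    have "gav P E (\<lambda>s. f s * (A s - ?m)^2) = gav P E (\<lambda>s. (f s * A s * A s - (2 * ?m) * (f s * A s)) + ?m^2 * f s)"
      by (intro gav_cong) (simp add: power2_eq_square algebra_simps)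
    then show ?thesis by (simp add: gav_add gav_diff gav_cmult)
  qed
  have e2: "gav P E (\<lambda>s. (A s - ?m)^2) = gav P E (\<lambda>s. A s * A s) - ?m^2"
  proof -
    have "gav P E (\<lambda>s. (A s - ?m)^2) = gav P E (\<lambda>s. (A s * A s - (2 * ?m) * A s) + ?m^2)"
      by (intro gav_cong) (simp add: power2_eq_square algebra_simps)
    then show ?thesis using gav_const[OF assms] by (simp add: gav_add gav_diff gav_cmult power2_eq_square)
  qed
  show ?thesis unfolding Vf_def cov_def e1 e2 by (simp add: power2_eq_square algebra_simps)
qed

lemma Vf_lower:
  assumes "finite P" "P \<noteq> {}" "\<And>s. s \<in> P \<Longrightarrow> 0 \<le> f s" "\<And>s. s \<in> P \<Longrightarrow> \<bar>A s\<bar> \<le> M"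
  shows "- (M^2 * gav P E f) \<le> Vf P E f A"
proof -
  let ?m = "gav P E A"
  have a: "0 \<le> gav P E (\<lambda>s. f s * (A s - ?m)^2)"
    using assms by (intro gav_nonneg) auto
  have "gav P E (\<lambda>s. (A s - ?m)^2) = gav P E (\<lambda>s. A s^2) - ?m^2"
  proof -
    have "gav P E (\<lambda>s. (A s - ?m)^2) = gav P E (\<lambda>s. (A s^2 - (2 * ?m) * A s) + ?m^2)"
      by (intro gav_cong) (simp add: power2_eq_square algebra_simps)
    then show ?thesis using gav_const[OF assms(1,2)] by (simp add: gav_add gav_diff gav_cmult power2_eq_square)
  qed
  also have "\<dots> \<le> M^2"
  proof -
    have "gav P E (\<lambda>s. A s^2) \<le> gav P E (\<lambda>s. M^2)"
    proof (rule gav_mono[OF assms(1,2)])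
      fix s assume "s \<in> P"
      then have "\<bar>A s\<bar>^2 \<le> M^2" using assms(4)[of s] by (intro power_mono) auto
      then show "A s^2 \<le> M^2" by simp
    qed
    moreover have "gav P E (\<lambda>s. M^2) = M^2" by (rule gav_const[OF assms(1,2)])
    moreover have "0 \<le> ?m^2" by simp
    ultimately show ?thesis by linarith
  qed
  finally have b: "gav P E (\<lambda>s. (A s - ?m)^2) \<le> M^2" .
  have c: "0 \<le> gav P E f" using assms by (intro gav_nonneg) auto
  have "gav P E f * gav P E (\<lambda>s. (A s - ?m)^2) \<le> gav P E f * M^2"
    by (rule mult_left_mono[OF b c])
  then show ?thesis using Vf_alt[OF assms(1,2)] a by (simp add: mult.commute)
qed

lemma Vf_upper:
  assumes "finite P" "P \<noteq> {}" "\<And>s. s \<in> P \<Longrightarrow> 0 \<le> f s" "\<And>s. s \<in> P \<Longrightarrow> \<bar>A s\<bar> \<le> M"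
  shows "Vf P E f A \<le> 4 * M^2 * gav P E f"
proof -
  let ?m = "gav P E A"
  have m: "\<bar>?m\<bar> \<le> M" using gav_abs_bound assms by blast
  have "gav P E (\<lambda>s. f s * (A s - ?m)^2) \<le> (4 * M^2) * gav P E f"
  proof (rule gav_bound_mult[OF assms(1,2,3)])
    fix s assume "s \<in> P"
    then have "\<bar>A s - ?m\<bar> \<le> 2 * M" using assms(4)[of s] m by linarith
    then have "\<bar>A s - ?m\<bar>^2 \<le> (2*M)^2" by (rule power_mono) auto
    then show "(A s - ?m)^2 \<le> 4 * M^2" by (simp add: power_mult_distrib)
  qed auto
  moreover have "0 \<le> gav P E f * gav P E (\<lambda>s. (A s - ?m)^2)"
    using assms by (intro mult_nonneg_nonneg gav_nonneg) auto
  ultimately show ?thesis using Vf_alt[OF assms(1,2)] by simp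
qed

lemma cov_upper:
  assumes "finite P" "P \<noteq> {}" "\<And>s. s \<in> P \<Longrightarrow> 0 \<le> f s" "\<And>s. s \<in> P \<Longrightarrow> \<bar>C s\<bar> \<le> M"
  shows "cov P E f C \<le> 2 * M * gav P E f"
proof -
  have a: "gav P E (\<lambda>s. f s * C s) \<le> M * gav P E f"
    using assms by (intro gav_bound_mult) (auto simp: abs_le_iff)
  have "\<bar>gav P E C\<bar> \<le> M" using gav_abs_bound assms by blast
  moreover have "0 \<le> gav P E f" using assms by (intro gav_nonneg) auto
  ultimately have "- (gav P E f * gav P E C) \<le> M * gav P E f"
  proof -
    have "\<bar>gav P E f * gav P E C\<bar> \<le> gav P E f * M"
      using \<open>\<bar>gav P E C\<bar> \<le> M\<close> \<open>0 \<le> gav P E f\<close> by (simp add: abs_mult mult_left_mono)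
    then show ?thesis by (simp add: abs_le_iff mult.commute)
  qed
  then show ?thesis unfolding cov_def using a by simp
qed

lemma cov_abs:
  assumes "finite P" "P \<noteq> {}" "\<And>s. s \<in> P \<Longrightarrow> 0 \<le> f s" "\<And>s. s \<in> P \<Longrightarrow> \<bar>C s\<bar> \<le> M"
  shows "\<bar>cov P E f C\<bar> \<le> 2 * M * (\<Sum>s\<in>P. f s)"
proof -
  have a: "\<bar>gav P E (\<lambda>s. f s * C s)\<bar> \<le> M * gav P E f"
  proof -
    have "gav P E (\<lambda>s. f s * C s) \<le> M * gav P E f"
      using assms by (intro gav_bound_mult) (auto simp: abs_le_iff)
    moreover have "(- M) * gav P E f \<le> gav P E (\<lambda>s. f s * C s)"
    proof (rule gav_bound_mult_lower[OF assms(1,2,3)])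
      fix s assume "s \<in> P" then show "- M \<le> C s" using assms(4)[of s] by linarith
    qed
    ultimately show ?thesis by (simp add: abs_le_iff)
  qed
  have b: "\<bar>gav P E C\<bar> \<le> M" using gav_abs_bound assms by blast
  have c: "0 \<le> gav P E f" using assms by (intro gav_nonneg) auto
  have d: "gav P E f \<le> (\<Sum>s\<in>P. f s)" using gav_le_sum assms by blast
  have M0: "0 \<le> M" using assms(4)[of "SOME s. s \<in> P"] assms(2) by (metis abs_ge_zero order_trans some_in_eq)
  have "\<bar>gav P E f * gav P E C\<bar> \<le> gav P E f * M" using b c by (simp add: abs_mult mult_left_mono)
  then have "\<bar>gav P E f * gav P E C\<bar> \<le> M * gav P E f" by (simp add: mult.commute)
  then have "\<bar>cov P E f C\<bar> \<le> 2 * M * gav P E f" unfolding cov_def using a by linarith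
  also have "\<dots> \<le> 2 * M * (\<Sum>s\<in>P. f s)" using d M0 by (intro mult_left_mono) auto
  finally show ?thesis .
qed


lemma std_gauss_prob: "prob_space std_gauss"
  unfolding std_gauss_def using prob_space_normal_density[of 1 0] by simp

lemma sets_std_gauss[simp, measurable_cong]: "sets std_gauss = sets borel"
  by (simp add: std_gauss_def)

lemma space_std_gauss[simp]: "space std_gauss = UNIV"
  by (simp add: std_gauss_def)

lemma integral_std_gauss:
  "f \<in> borel_measurable borel \<Longrightarrow> integral\<^sup>L std_gauss f = (\<integral>x. std_normal_density x * f x \<partial>lborel)"
  unfolding std_gauss_def by (subst integral_density) auto

lemma integrable_std_gauss:
  "f \<in> borel_measurable borel \<Longrightarrow> integrable std_gauss f \<longleftrightarrow> integrable lborel (\<lambda>x. std_normal_density x * f x)"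
  unfolding std_gauss_def by (subst integrable_density) auto

lemma integrable_std_gauss_abs: "integrable std_gauss (\<lambda>x. \<bar>x\<bar>)"
  using integrable_std_normal_moment_abs[of 1] by (subst integrable_std_gauss) auto

lemma std_normal_deriv:
  "(std_normal_density has_real_derivative (- y * std_normal_density y)) (at y)"
proof -
  have "((\<lambda>y. (1 / sqrt (2 * pi)) * exp (- y\<^sup>2 / 2)) has_real_derivative
          (1 / sqrt (2 * pi)) * (exp (- y\<^sup>2 / 2) * (- (2 * y) / 2))) (at y)"
    by (intro DERIV_cmult DERIV_chain2[OF DERIV_exp]) (auto intro!: derivative_eq_intros)
  then show ?thesis
    by (simp add: std_normal_density_def[abs_def] std_normal_density_def mult_ac)
qed

lemma std_normal_lim: "((\<lambda>m::nat. std_normal_density (real m)) \<longlonglongrightarrow> 0)"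
proof -
  have "((\<lambda>m::nat. (1 / sqrt (2 * pi)) * exp (- (real m)\<^sup>2 / 2)) \<longlonglongrightarrow> 0)"
    by real_asymp
  then show ?thesis by (simp add: std_normal_density_def)
qed

lemma gauss_ibp:
  fixes h h' :: "real \<Rightarrow> real"
  assumes d: "\<And>y. (h has_real_derivative h' y) (at y)"
    and c: "continuous_on UNIV h'"
    and b1: "\<And>y. \<bar>h y\<bar> \<le> B1" and b2: "\<And>y. \<bar>h' y\<bar> \<le> B2"
  shows "integral\<^sup>L std_gauss (\<lambda>y. y * h y) = integral\<^sup>L std_gauss h'"
proof -
  let ?phi = "std_normal_density"
  define G where "G y = ?phi y * h y" for y
  define G' where "G' y = ?phi y * h' y - y * ?phi y * h y" for y
  have ch: "continuous_on UNIV h"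
    using d by (meson DERIV_isCont continuous_at_imp_continuous_on)
  have cphi: "continuous_on UNIV ?phi"
    using std_normal_deriv by (meson DERIV_isCont continuous_at_imp_continuous_on)
  have cG': "continuous_on A G'" for A
    unfolding G'_def
    by (intro continuous_intros continuous_on_subset[OF c] continuous_on_subset[OF ch]
          continuous_on_subset[OF cphi]) auto
  have dG: "(G has_real_derivative G' y) (at y)" for y
  proof -
    have "(G has_real_derivative (- y * ?phi y) * h y + h' y * ?phi y) (at y)"
      unfolding G_def[abs_def] by (intro DERIV_mult std_normal_deriv d)
    then show ?thesis by (simp add: G'_def algebra_simps)
  qed
  have mh[measurable]: "h \<in> borel_measurable borel" using ch by (intro borel_measurable_continuous_onI)
  have mh'[measurable]: "h' \<in> borel_measurable borel" using c by (intro borel_measurable_continuous_onI)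
  have mG'[measurable]: "G' \<in> borel_measurable borel" using cG' by (intro borel_measurable_continuous_onI)
  have int1: "integrable lborel (\<lambda>x. ?phi x * h' x)"
  proof (rule Bochner_Integration.integrable_bound[of _ "\<lambda>x. ?phi x * B2"])
    show "integrable lborel (\<lambda>x. ?phi x * B2)" by auto
    show "AE x in lborel. norm (?phi x * h' x) \<le> norm (?phi x * B2)"
    proof (intro AE_I2)
      fix x
      have "\<bar>h' x\<bar> \<le> \<bar>B2\<bar>" using b2[of x] by linarith
      then show "norm (?phi x * h' x) \<le> norm (?phi x * B2)"
        by (simp add: abs_mult mult_left_mono)
    qed
  qed auto
  have int2: "integrable lborel (\<lambda>x. ?phi x * (x * h x))"
  proof (rule Bochner_Integration.integrable_bound[of _ "\<lambda>x. (?phi x * \<bar>x\<bar> ^ 1) * B1"])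
    show "integrable lborel (\<lambda>x. (?phi x * \<bar>x\<bar> ^ 1) * B1)"
      using integrable_std_normal_moment_abs[of 1] by auto
    show "AE x in lborel. norm (?phi x * (x * h x)) \<le> norm ((?phi x * \<bar>x\<bar> ^ 1) * B1)"
    proof (intro AE_I2)
      fix x
      have "\<bar>h x\<bar> \<le> \<bar>B1\<bar>" using b1[of x] by linarith
      then have "?phi x * \<bar>x\<bar> * \<bar>h x\<bar> \<le> ?phi x * \<bar>x\<bar> * \<bar>B1\<bar>"
        by (intro mult_left_mono) auto
      then show "norm (?phi x * (x * h x)) \<le> norm ((?phi x * \<bar>x\<bar> ^ 1) * B1)"
        by (simp add: abs_mult mult.assoc)
    qed
  qed auto
  have intG': "integrable lborel G'"
  proof -
    have "integrable lborel (\<lambda>x. ?phi x * h' x - ?phi x * (x * h x))"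
      using int1 int2 by auto
    then show ?thesis unfolding G'_def by (simp add: mult_ac)
  qed
  have FTC: "(\<integral>x. indicator {- real m .. real m} x *\<^sub>R G' x \<partial>lborel) = G (real m) - G (- real m)" for m :: nat
    by (intro integral_FTC_atLeastAtMost)
      (auto intro!: continuous_on_subset[OF cG'] DERIV_subset[OF dG]
        simp: has_real_derivative_iff_has_vector_derivative[symmetric])
  have lim1: "(\<lambda>m::nat. \<integral>x. indicator {- real m .. real m} x *\<^sub>R G' x \<partial>lborel) \<longlonglongrightarrow> integral\<^sup>L lborel G'"
  proof (rule integral_dominated_convergence[where w = "\<lambda>x. norm (G' x)"])
    show "integrable lborel (\<lambda>x. norm (G' x))" using intG' by auto
    show "AE x in lborel. (\<lambda>m::nat. indicator {- real m .. real m} x *\<^sub>R G' x) \<longlonglongrightarrow> G' x"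
    proof (intro AE_I2)
      fix x :: real
      obtain N :: nat where "\<bar>x\<bar> \<le> real N" using real_arch_simple by blast
      then have "eventually (\<lambda>m. indicator {- real m .. real m} x *\<^sub>R G' x = G' x) sequentially"
        unfolding eventually_sequentially
        by (intro exI[of _ N]) (auto simp: indicator_def)
      then show "(\<lambda>m::nat. indicator {- real m .. real m} x *\<^sub>R G' x) \<longlonglongrightarrow> G' x"
        by (rule tendsto_eventually)
    qed
    show "AE x in lborel. norm (indicator {- real m .. real m} x *\<^sub>R G' x) \<le> norm (G' x)" for m :: nat
      by (auto simp: indicator_def)
  qed auto
  have bG: "norm (G y) \<le> \<bar>B1\<bar> * ?phi y" for y
  proof -
    have "\<bar>h y\<bar> \<le> \<bar>B1\<bar>" using b1[of y] by linarith
    then have "\<bar>h y\<bar> * ?phi y \<le> \<bar>B1\<bar> * ?phi y" by (rule mult_right_mono) simp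
    then show ?thesis unfolding G_def by (simp add: abs_mult mult.commute)
  qed
  have phi_sym: "?phi (- y) = ?phi y" for y by (simp add: std_normal_density_def)
  have limG1: "(\<lambda>m::nat. G (real m)) \<longlonglongrightarrow> 0"
    by (rule Lim_null_comparison[OF always_eventually[OF allI[OF bG]]])
       (use tendsto_mult[OF tendsto_const std_normal_lim] in simp)
  have limG2: "(\<lambda>m::nat. G (- real m)) \<longlonglongrightarrow> 0"
    by (rule Lim_null_comparison[OF always_eventually[OF allI]], rule bG[of "- real _", unfolded phi_sym])
       (use tendsto_mult[OF tendsto_const std_normal_lim] in simp)
  have "(\<lambda>m::nat. \<integral>x. indicator {- real m .. real m} x *\<^sub>R G' x \<partial>lborel) \<longlonglongrightarrow> 0 - 0"
    unfolding FTC by (intro tendsto_diff limG1 limG2)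
  then have G0: "integral\<^sup>L lborel G' = 0"
    using lim1 LIMSEQ_unique by fastforce
  have "integral\<^sup>L lborel G' = (\<integral>x. ?phi x * h' x \<partial>lborel) - (\<integral>x. ?phi x * (x * h x) \<partial>lborel)"
  proof -
    have "integral\<^sup>L lborel G' = (\<integral>x. ?phi x * h' x - ?phi x * (x * h x) \<partial>lborel)"
      unfolding G'_def by (simp add: mult_ac)
    also have "\<dots> = (\<integral>x. ?phi x * h' x \<partial>lborel) - (\<integral>x. ?phi x * (x * h x) \<partial>lborel)"
      using int1 int2 by (rule Bochner_Integration.integral_diff)
    finally show ?thesis .
  qed
  then show ?thesis
    using G0 by (simp add: integral_std_gauss)
qed


abbreviation Om :: "'i set \<Rightarrow> ('i \<Rightarrow> real) measure" where
  "Om I \<equiv> PiM I (\<lambda>_. std_gauss)"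

lemma prob_Om: "prob_space (Om I)"
  by (rule prob_space_PiM) (rule std_gauss_prob)

lemma space_Om: "space (Om I) = PiE I (\<lambda>_. UNIV)"
  by (simp add: space_PiM)

lemma comp_meas[measurable]: "(\<lambda>g. g k) \<in> borel_measurable (Om I)"
proof (cases "k \<in> I")
  case True
  have "(\<lambda>g. g k) \<in> measurable (Om I) std_gauss"
    using True by (rule measurable_component_singleton)
  moreover have "measurable (Om I) std_gauss = measurable (Om I) borel"
    by (rule measurable_cong_sets) auto
  ultimately show ?thesis by simp
next
  case False
  have "g \<in> space (Om I) \<Longrightarrow> g k = undefined" for g
    using False by (auto simp: space_Om PiE_def extensional_def)
  then show ?thesis
    by (rule measurable_cong[THEN iffD2]) (auto intro: measurable_const)
qed

lemma upd_space: "g \<in> space (Om I) \<Longrightarrow> k \<in> I \<Longrightarrow> g(k := y) \<in> space (Om I)"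
  by (auto simp: space_Om PiE_def extensional_def)

lemma integrable_comp_abs:
  assumes "k \<in> I"
  shows "integrable (Om I) (\<lambda>g. \<bar>g k\<bar>)"
proof -
  have e: "distr (Om I) std_gauss (\<lambda>g. g k) = std_gauss"
    by (rule distr_PiM_component) (rule std_gauss_prob, rule assms)
  have m1: "(\<lambda>g. g k) \<in> measurable (Om I) std_gauss"
    by (rule measurable_component_singleton[OF assms])
  have m2: "(\<lambda>x::real. \<bar>x\<bar>) \<in> borel_measurable std_gauss"
    by (subst measurable_cong_sets[OF sets_std_gauss refl]) simp
  have "integrable (distr (Om I) std_gauss (\<lambda>g. g k)) (\<lambda>x. \<bar>x\<bar>) \<longleftrightarrow> integrable (Om I) (\<lambda>g. \<bar>g k\<bar>)"
    by (rule integrable_distr_eq[OF m1 m2])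
  then show ?thesis using integrable_std_gauss_abs unfolding e by simp
qed

lemma integrable_bounded_Om:
  fixes f :: "('i \<Rightarrow> real) \<Rightarrow> real"
  assumes "f \<in> borel_measurable (Om I)" "\<And>g. g \<in> space (Om I) \<Longrightarrow> \<bar>f g\<bar> \<le> B"
  shows "integrable (Om I) f"
proof -
  interpret prob_space "Om I" by (rule prob_Om)
  show ?thesis
  proof (rule integrable_const_bound[where B=B])
    show "AE x in Om I. norm (f x) \<le> B" using assms(2) by (intro AE_I2) simp
  qed (rule assms(1))
qed

lemma prod_gauss_ibp:
  fixes psi psi' :: "('i \<Rightarrow> real) \<Rightarrow> real"
  assumes fin: "finite I" and k: "k \<in> I"
    and m1: "psi \<in> borel_measurable (Om I)" and m2: "psi' \<in> borel_measurable (Om I)"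
    and b1: "\<And>g. g \<in> space (Om I) \<Longrightarrow> \<bar>psi g\<bar> \<le> B1"
    and b2: "\<And>g. g \<in> space (Om I) \<Longrightarrow> \<bar>psi' g\<bar> \<le> B2"
    and d: "\<And>g y. g \<in> space (Om I) \<Longrightarrow> ((\<lambda>y. psi (g(k:=y))) has_real_derivative psi' (g(k:=y))) (at y)"
    and c: "\<And>g. g \<in> space (Om I) \<Longrightarrow> continuous_on UNIV (\<lambda>y. psi' (g(k:=y)))"
  shows "(\<integral>g. g k * psi g \<partial>Om I) = (\<integral>g. psi' g \<partial>Om I)"
proof -
  define J where "J = I - {k}"
  have IJ: "I = insert k J" "k \<notin> J" "finite J" using k fin by (auto simp: J_def)
  have psf: "product_sigma_finite (\<lambda>_::'i. std_gauss)"
    unfolding product_sigma_finite_def by (intro allI prob_space_imp_sigma_finite std_gauss_prob)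
  have int1: "integrable (Om I) (\<lambda>g. g k * psi g)"
  proof (rule Bochner_Integration.integrable_bound[of _ "\<lambda>g. \<bar>B1\<bar> * \<bar>g k\<bar>"])
    show "integrable (Om I) (\<lambda>g. \<bar>B1\<bar> * \<bar>g k\<bar>)" using integrable_comp_abs[OF k] by auto
    show "(\<lambda>g. g k * psi g) \<in> borel_measurable (Om I)" using m1 by measurable
    show "AE g in Om I. norm (g k * psi g) \<le> norm (\<bar>B1\<bar> * \<bar>g k\<bar>)"
    proof (intro AE_I2 impI)
      fix g assume "g \<in> space (Om I)"
      then have "\<bar>psi g\<bar> \<le> \<bar>B1\<bar>" using b1[of g] by linarith
      then have "\<bar>g k\<bar> * \<bar>psi g\<bar> \<le> \<bar>g k\<bar> * \<bar>B1\<bar>" by (rule mult_left_mono) simp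
      then show "norm (g k * psi g) \<le> norm (\<bar>B1\<bar> * \<bar>g k\<bar>)"
        by (simp add: abs_mult mult.commute)
    qed
  qed
  have int2: "integrable (Om I) psi'"
    using m2 b2 by (rule integrable_bounded_Om)
  have "(\<integral>g. g k * psi g \<partial>Om I) = (\<integral>g. g k * psi g \<partial>Om (insert k J))"
    using IJ(1) by simp
  also have "\<dots> = (\<integral>x. (\<integral>y. (x(k:=y)) k * psi (x(k:=y)) \<partial>std_gauss) \<partial>Om J)"
    by (rule product_sigma_finite.product_integral_insert[OF psf IJ(3) IJ(2)]) (use int1 IJ(1) in simp)
  also have "\<dots> = (\<integral>x. (\<integral>y. psi' (x(k:=y)) \<partial>std_gauss) \<partial>Om J)"
  proof (rule Bochner_Integration.integral_cong[OF refl])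
    fix x assume x: "x \<in> space (Om J)"
    have xs: "x(k:=y) \<in> space (Om I)" for y
      using x IJ by (auto simp: space_Om PiE_def extensional_def)
    have "(\<integral>y. (x(k:=y)) k * psi (x(k:=y)) \<partial>std_gauss) = (\<integral>y. y * psi (x(k:=y)) \<partial>std_gauss)"
      by simp
    also have "\<dots> = (\<integral>y. psi' (x(k:=y)) \<partial>std_gauss)"
    proof (rule gauss_ibp)
      fix y
      have "x(k:=y) \<in> space (Om I)" by (rule xs)
      from d[OF this, of y] show "((\<lambda>y. psi (x(k := y))) has_real_derivative psi' (x(k := y))) (at y)"
        by simp
      show "\<bar>psi (x(k := y))\<bar> \<le> B1" using b1 xs by blast
      show "\<bar>psi' (x(k := y))\<bar> \<le> B2" using b2 xs by blast
    next
      have "x(k:=0) \<in> space (Om I)" by (rule xs)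
      from c[OF this] show "continuous_on UNIV (\<lambda>y. psi' (x(k := y)))" by simp
    qed
    finally show "(\<integral>y. (x(k:=y)) k * psi (x(k:=y)) \<partial>std_gauss) = (\<integral>y. psi' (x(k:=y)) \<partial>std_gauss)" .
  qed
  also have "\<dots> = (\<integral>g. psi' g \<partial>Om (insert k J))"
    by (rule product_sigma_finite.product_integral_insert[symmetric, OF psf IJ(3) IJ(2)]) (use int2 IJ(1) in simp)
  also have "\<dots> = (\<integral>g. psi' g \<partial>Om I)"
    using IJ(1) by simp
  finally show ?thesis .
qed


lemma cont_under_integral:
  fixes F :: "real \<Rightarrow> 'a \<Rightarrow> real"
  assumes fm: "finite_measure M"
    and mF: "\<And>x. x \<in> S \<Longrightarrow> F x \<in> borel_measurable M"
    and cF: "\<And>\<omega>. \<omega> \<in> space M \<Longrightarrow> continuous_on S (\<lambda>x. F x \<omega>)"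
    and bF: "\<And>x \<omega>. x \<in> S \<Longrightarrow> \<omega> \<in> space M \<Longrightarrow> \<bar>F x \<omega>\<bar> \<le> B"
  shows "continuous_on S (\<lambda>x. \<integral>\<omega>. F x \<omega> \<partial>M)"
proof (rule continuous_on_sequentiallyI)
  fix u a assume u: "\<forall>n. u n \<in> S" and a: "a \<in> S" and lim: "u \<longlonglongrightarrow> a"
  interpret finite_measure M by (rule fm)
  show "(\<lambda>n. \<integral>\<omega>. F (u n) \<omega> \<partial>M) \<longlonglongrightarrow> (\<integral>\<omega>. F a \<omega> \<partial>M)"
  proof (rule integral_dominated_convergence[where w = "\<lambda>_. B"])
    show "F a \<in> borel_measurable M" using mF a by blast
    show "F (u n) \<in> borel_measurable M" for n using mF u by blast
    show "integrable M (\<lambda>_. B)" by simp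
    show "AE \<omega> in M. (\<lambda>n. F (u n) \<omega>) \<longlonglongrightarrow> F a \<omega>"
    proof (rule AE_I2)
      fix \<omega> assume "\<omega> \<in> space M"
      then show "(\<lambda>n. F (u n) \<omega>) \<longlonglongrightarrow> F a \<omega>"
        using continuous_on_tendsto_compose[OF cF lim a] u by simp
    qed
    show "AE \<omega> in M. norm (F (u n) \<omega>) \<le> B" for n
      using bF u by (intro AE_I2) simp
  qed
qed

lemma deriv_under_integral:
  fixes F F' :: "real \<Rightarrow> 'a \<Rightarrow> real" and M :: "'a measure"
  assumes ab: "a < t0" "t0 < b"
    and intF: "\<And>x. x \<in> {a<..<b} \<Longrightarrow> integrable M (F x)"
    and dF: "\<And>x \<omega>. x \<in> {a<..<b} \<Longrightarrow> \<omega> \<in> space M \<Longrightarrow> ((\<lambda>x. F x \<omega>) has_real_derivative F' x \<omega>) (at x)"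
    and mF': "F' t0 \<in> borel_measurable M"
    and intG: "integrable M G"
    and bnd: "\<And>x \<omega>. x \<in> {a<..<b} \<Longrightarrow> \<omega> \<in> space M \<Longrightarrow> \<bar>F' x \<omega>\<bar> \<le> G \<omega>"
  shows "((\<lambda>x. \<integral>\<omega>. F x \<omega> \<partial>M) has_real_derivative (\<integral>\<omega>. F' t0 \<omega> \<partial>M)) (at t0)"
proof -
  let ?u = "\<lambda>x. \<integral>\<omega>. F x \<omega> \<partial>M"
  let ?S = "{a<..<b}"
  have t0S: "t0 \<in> ?S" using ab by simp
  have mvt: "\<bar>F y \<omega> - F t0 \<omega>\<bar> \<le> G \<omega> * \<bar>y - t0\<bar>" if "y \<in> ?S" "\<omega> \<in> space M" for y \<omega>
  proof -
    have "norm ((\<lambda>x. F x \<omega>) y - (\<lambda>x. F x \<omega>) t0) \<le> G \<omega> * norm (y - t0)"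
    proof (rule field_differentiable_bound[where S = ?S])
      show "convex ?S" by simp
      show "((\<lambda>x. F x \<omega>) has_field_derivative F' z \<omega>) (at z within ?S)" if "z \<in> ?S" for z
        using dF[OF that \<open>\<omega> \<in> space M\<close>] by (rule has_field_derivative_at_within)
      show "norm (F' z \<omega>) \<le> G \<omega>" if "z \<in> ?S" for z
        using bnd[OF that \<open>\<omega> \<in> space M\<close>] by simp
    qed (use that t0S in auto)
    then show ?thesis by simp
  qed
  have "((\<lambda>h. (?u (t0 + h) - ?u t0) / h) \<longlongrightarrow> (\<integral>\<omega>. F' t0 \<omega> \<partial>M)) (at 0)"
  proof (subst tendsto_at_iff_sequentially, intro allI impI)
    fix X :: "nat \<Rightarrow> real" assume X0: "\<forall>i. X i \<in> UNIV - {0}" and X: "X \<longlonglongrightarrow> 0"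
    have ev: "eventually (\<lambda>i. t0 + X i \<in> ?S) sequentially"
    proof -
      have "(\<lambda>i. t0 + X i) \<longlonglongrightarrow> t0 + 0" by (intro tendsto_intros X)
      then have l: "(\<lambda>i. t0 + X i) \<longlonglongrightarrow> t0" by simp
      have "eventually (\<lambda>i. a < t0 + X i) sequentially" using order_tendstoD(1)[OF l] ab by blast
      moreover have "eventually (\<lambda>i. t0 + X i < b) sequentially" using order_tendstoD(2)[OF l] ab by blast
      ultimately show ?thesis by eventually_elim simp
    qed
    define s where "s i \<omega> = (if t0 + X i \<in> ?S then (F (t0 + X i) \<omega> - F t0 \<omega>) / X i else 0)" for i \<omega>
    have int_eq: "(\<integral>\<omega>. s i \<omega> \<partial>M) = (?u (t0 + X i) - ?u t0) / X i" if "t0 + X i \<in> ?S" for i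
    proof -
      have "(\<integral>\<omega>. s i \<omega> \<partial>M) = (\<integral>\<omega>. (F (t0 + X i) \<omega> - F t0 \<omega>) / X i \<partial>M)"
        using that by (simp add: s_def)
      also have "\<dots> = (\<integral>\<omega>. (F (t0 + X i) \<omega> - F t0 \<omega>) \<partial>M) / X i"
        by simp
      also have "\<dots> = (?u (t0 + X i) - ?u t0) / X i"
        using intF[OF that] intF[OF t0S] by (subst Bochner_Integration.integral_diff) auto
      finally show ?thesis .
    qed
    have conv: "(\<lambda>i. \<integral>\<omega>. s i \<omega> \<partial>M) \<longlonglongrightarrow> (\<integral>\<omega>. F' t0 \<omega> \<partial>M)"
    proof (rule integral_dominated_convergence[where w = G])
      show "F' t0 \<in> borel_measurable M" by (rule mF')
      show "s i \<in> borel_measurable M" for i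
      proof (cases "t0 + X i \<in> ?S")
        case True
        then have "s i = (\<lambda>\<omega>. (F (t0 + X i) \<omega> - F t0 \<omega>) / X i)" by (simp add: s_def fun_eq_iff)
        moreover have "F (t0 + X i) \<in> borel_measurable M" "F t0 \<in> borel_measurable M"
          using intF[OF True] intF[OF t0S] by auto
        ultimately show ?thesis by simp
      next
        case False
        have "s i = (\<lambda>\<omega>. 0)" unfolding s_def by (rule ext) (rule if_not_P[OF False])
        then show ?thesis by simp
      qed
      show "integrable M G" by (rule intG)
      show "AE \<omega> in M. (\<lambda>i. s i \<omega>) \<longlonglongrightarrow> F' t0 \<omega>"
      proof (rule AE_I2)
        fix \<omega> assume \<omega>: "\<omega> \<in> space M"
        have "((\<lambda>h. (F (t0 + h) \<omega> - F t0 \<omega>) / h) \<longlongrightarrow> F' t0 \<omega>) (at 0)"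
          using dF[OF t0S \<omega>] by (simp add: DERIV_def)
        then have "((\<lambda>h. (F (t0 + h) \<omega> - F t0 \<omega>) / h) \<circ> X) \<longlonglongrightarrow> F' t0 \<omega>"
          using X0 X by (simp add: tendsto_at_iff_sequentially)
        moreover have "eventually (\<lambda>i. ((\<lambda>h. (F (t0 + h) \<omega> - F t0 \<omega>) / h) \<circ> X) i = s i \<omega>) sequentially"
          using ev by eventually_elim (simp add: s_def)
        ultimately show "(\<lambda>i. s i \<omega>) \<longlonglongrightarrow> F' t0 \<omega>"
          by (rule Lim_transform_eventually)
      qed
      show "AE \<omega> in M. norm (s i \<omega>) \<le> G \<omega>" for i
      proof (rule AE_I2)
        fix \<omega> assume \<omega>: "\<omega> \<in> space M"
        have G0: "0 \<le> G \<omega>" using bnd[OF t0S \<omega>] by linarith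
        show "norm (s i \<omega>) \<le> G \<omega>"
        proof (cases "t0 + X i \<in> ?S")
          case True
          have Xi: "X i \<noteq> 0" using X0 by auto
          have "\<bar>F (t0 + X i) \<omega> - F t0 \<omega>\<bar> \<le> G \<omega> * \<bar>X i\<bar>"
            using mvt[OF True \<omega>] by simp
          then have "\<bar>F (t0 + X i) \<omega> - F t0 \<omega>\<bar> / \<bar>X i\<bar> \<le> G \<omega>"
            using Xi by (simp add: divide_le_eq)
          then show ?thesis using True by (simp add: s_def abs_divide)
        next
          case False
          then have "s i \<omega> = 0" unfolding s_def by (rule if_not_P)
          then show ?thesis using G0 by simp
        qed
      qed
    qed
    have "eventually (\<lambda>i. (\<integral>\<omega>. s i \<omega> \<partial>M) = ((\<lambda>h. (?u (t0 + h) - ?u t0) / h) \<circ> X) i) sequentially"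
      using ev by eventually_elim (simp add: int_eq)
    then show "((\<lambda>h. (?u (t0 + h) - ?u t0) / h) \<circ> X) \<longlonglongrightarrow> (\<integral>\<omega>. F' t0 \<omega> \<partial>M)"
      by (rule Lim_transform_eventually[OF conv])
  qed
  then show ?thesis by (simp add: DERIV_def)
qed


lemma cov_add2: "cov P E f (\<lambda>s. h s + k s) = cov P E f h + cov P E f k"
  unfolding cov_def by (simp add: distrib_left gav_add algebra_simps)

lemma cov_diff2: "cov P E f (\<lambda>s. h s - k s) = cov P E f h - cov P E f k"
  unfolding cov_def by (simp add: right_diff_distrib gav_diff algebra_simps)

lemma cov_cmult2: "cov P E f (\<lambda>s. c * h s) = c * cov P E f h"
proof -
  have "gav P E (\<lambda>s. f s * (c * h s)) = c * gav P E (\<lambda>s. f s * h s)"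
    using gav_cmult[of P E c "\<lambda>s. f s * h s"] by (simp add: mult_ac)
  then show ?thesis unfolding cov_def by (simp add: gav_cmult algebra_simps)
qed

lemma cov_sum2: "cov P E f (\<lambda>s. \<Sum>k\<in>K. h k s) = (\<Sum>k\<in>K. cov P E f (h k))"
proof -
  have "gav P E (\<lambda>s. f s * (\<Sum>k\<in>K. h k s)) = (\<Sum>k\<in>K. gav P E (\<lambda>s. f s * h k s))"
    by (simp add: sum_distrib_left gav_sum)
  then show ?thesis unfolding cov_def by (simp add: gav_sum sum_distrib_left sum_subtractf)
qed

lemma gav_measurable:
  assumes "\<And>s. (\<lambda>x. e x s) \<in> borel_measurable M" "\<And>s. (\<lambda>x. h x s) \<in> borel_measurable M"
  shows "(\<lambda>x. gav P (e x) (h x)) \<in> borel_measurable M"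
  unfolding gav_def using assms by measurable

lemma gav_cont:
  assumes "finite P" "P \<noteq> {}" "\<And>s. s \<in> P \<Longrightarrow> continuous_on S (\<lambda>y. e y s)"
  shows "continuous_on S (\<lambda>y. gav P (e y) h)"
  unfolding gav_def
proof (intro continuous_on_divide continuous_on_sum continuous_on_mult continuous_on_const
     continuous_on_exp assms ballI)
  fix y show "(\<Sum>s\<in>P. exp (e y s)) \<noteq> 0" using Z_pos[OF assms(1,2)] by (metis less_irrefl)
qed

lemma gav_deriv_dir:
  assumes "finite P" "P \<noteq> {}"
  shows "((\<lambda>y. gav P (\<lambda>s. a s + y * (c * A s)) h) has_real_derivative
           c * cov P (\<lambda>s. a s + y0 * (c * A s)) h A) (at y0)"
proof -
  have "((\<lambda>y. gav P (\<lambda>s. a s + y * (c * A s)) h) has_real_derivative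
     (gav P (\<lambda>s. a s + y0 * (c * A s)) (\<lambda>s. h s * (c * A s)) - gav P (\<lambda>s. a s + y0 * (c * A s)) h * gav P (\<lambda>s. a s + y0 * (c * A s)) (\<lambda>s. c * A s))) (at y0)"
    by (rule gav_deriv[OF assms]) (auto intro!: derivative_eq_intros)
  moreover have "gav P (\<lambda>s. a s + y0 * (c * A s)) (\<lambda>s. h s * (c * A s)) = c * gav P (\<lambda>s. a s + y0 * (c * A s)) (\<lambda>s. h s * A s)"
    using gav_cmult[of P _ c "\<lambda>s. h s * A s"] by (simp add: mult_ac)
  ultimately show ?thesis unfolding cov_def by (simp add: gav_cmult algebra_simps)
qed

lemma cov_deriv_dir:
  assumes "finite P" "P \<noteq> {}"
  shows "((\<lambda>y. cov P (\<lambda>s. a s + y * (c * A s)) f A) has_real_derivative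
           c * Vf P (\<lambda>s. a s + y0 * (c * A s)) f A) (at y0)"
proof -
  let ?E = "\<lambda>y s. a s + y * (c * A s)"
  have d1: "((\<lambda>y. gav P (?E y) (\<lambda>s. f s * A s)) has_real_derivative c * cov P (?E y0) (\<lambda>s. f s * A s) A) (at y0)"
    by (rule gav_deriv_dir[OF assms])
  have d2: "((\<lambda>y. gav P (?E y) f) has_real_derivative c * cov P (?E y0) f A) (at y0)"
    by (rule gav_deriv_dir[OF assms])
  have d3: "((\<lambda>y. gav P (?E y) A) has_real_derivative c * cov P (?E y0) A A) (at y0)"
    by (rule gav_deriv_dir[OF assms])
  have "((\<lambda>y. gav P (?E y) (\<lambda>s. f s * A s) - gav P (?E y) f * gav P (?E y) A) has_real_derivative
     c * cov P (?E y0) (\<lambda>s. f s * A s) A - (c * cov P (?E y0) f A * gav P (?E y0) A + c * cov P (?E y0) A A * gav P (?E y0) f)) (at y0)"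
    by (intro DERIV_diff DERIV_mult d1 d2 d3)
  then show ?thesis unfolding cov_def[of P _ f A] Vf_def by (simp add: algebra_simps)
qed

lemma cont_cov_dir:
  assumes "finite P" "P \<noteq> {}"
  shows "continuous_on UNIV (\<lambda>y. Vf P (\<lambda>s. a s + y * b s) f A)"
  unfolding Vf_def cov_def
  by (intro continuous_intros gav_cont[OF assms]) 

lemma sum_upd:
  fixes g a :: "'i \<Rightarrow> real"
  assumes "finite K" "k \<in> K"
  shows "(\<Sum>k'\<in>K. (g(k:=y)) k' * a k') = (\<Sum>k'\<in>K. g k' * a k') + (y - g k) * a k"
proof -
  have e1: "(\<Sum>k'\<in>K. (g(k:=y)) k' * a k') = y * a k + (\<Sum>k'\<in>K-{k}. (g(k:=y)) k' * a k')"
    using sum.remove[OF assms, of "\<lambda>k'. (g(k:=y)) k' * a k'"] by simp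
  have e2: "(\<Sum>k'\<in>K-{k}. (g(k:=y)) k' * a k') = (\<Sum>k'\<in>K-{k}. g k' * a k')"
    by (intro sum.cong) auto
  have e3: "(\<Sum>k'\<in>K. g k' * a k') = g k * a k + (\<Sum>k'\<in>K-{k}. g k' * a k')"
    using sum.remove[OF assms, of "\<lambda>k'. g k' * a k'"] by simp
  have e4: "(y - g k) * a k = y * a k - g k * a k" by (simp add: left_diff_distrib)
  show ?thesis unfolding e1 e2 e3 e4 by simp
qed

lemma sum_upd_notin:
  fixes g a :: "'i \<Rightarrow> real"
  assumes "k \<notin> K"
  shows "(\<Sum>k'\<in>K. (g(k:=y)) k' * a k') = (\<Sum>k'\<in>K. g k' * a k')"
  using assms by (intro sum.cong) auto


lemma integrable_comp_mult:
  fixes psi :: "('i \<Rightarrow> real) \<Rightarrow> real"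
  assumes k: "k \<in> I" and m: "psi \<in> borel_measurable (Om I)"
    and b: "\<And>g. g \<in> space (Om I) \<Longrightarrow> \<bar>psi g\<bar> \<le> B1"
  shows "integrable (Om I) (\<lambda>g. g k * psi g)"
proof (rule Bochner_Integration.integrable_bound[of _ "\<lambda>g. \<bar>B1\<bar> * \<bar>g k\<bar>"])
  show "integrable (Om I) (\<lambda>g. \<bar>B1\<bar> * \<bar>g k\<bar>)" using integrable_comp_abs[OF k] by auto
  show "(\<lambda>g. g k * psi g) \<in> borel_measurable (Om I)" using m by measurable
  show "AE g in Om I. norm (g k * psi g) \<le> norm (\<bar>B1\<bar> * \<bar>g k\<bar>)"
  proof (intro AE_I2 impI)
    fix g assume "g \<in> space (Om I)"
    then have "\<bar>psi g\<bar> \<le> \<bar>B1\<bar>" using b[of g] by linarith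
    then have "\<bar>g k\<bar> * \<bar>psi g\<bar> \<le> \<bar>g k\<bar> * \<bar>B1\<bar>" by (rule mult_left_mono) simp
    then show "norm (g k * psi g) \<le> norm (\<bar>B1\<bar> * \<bar>g k\<bar>)"
      by (simp add: abs_mult mult.commute)
  qed
qed

lemma cov_measurable:
  assumes "\<And>s. (\<lambda>x. e x s) \<in> borel_measurable M" "\<And>s. (\<lambda>x. h x s) \<in> borel_measurable M"
  shows "(\<lambda>x. cov P (e x) f (h x)) \<in> borel_measurable M"
  unfolding cov_def
  by (intro borel_measurable_diff borel_measurable_times gav_measurable assms) measurable

lemma Vf_measurable:
  assumes "\<And>s. (\<lambda>x. e x s) \<in> borel_measurable M"
  shows "(\<lambda>x. Vf P (e x) f A) \<in> borel_measurable M"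
  unfolding Vf_def
  by (intro borel_measurable_diff borel_measurable_times gav_measurable cov_measurable assms) measurable

lemma Vf_abs:
  assumes "finite P" "P \<noteq> {}" "\<And>s. s \<in> P \<Longrightarrow> 0 \<le> f s" "\<And>s. s \<in> P \<Longrightarrow> \<bar>A s\<bar> \<le> M"
  shows "\<bar>Vf P E f A\<bar> \<le> 4 * M^2 * (\<Sum>s\<in>P. f s)"
proof -
  have l: "- (M^2 * gav P E f) \<le> Vf P E f A" by (rule Vf_lower[OF assms])
  have u: "Vf P E f A \<le> 4 * M^2 * gav P E f" by (rule Vf_upper[OF assms])
  have g0: "0 \<le> gav P E f" using assms by (intro gav_nonneg) auto
  have g1: "gav P E f \<le> (\<Sum>s\<in>P. f s)" using gav_le_sum assms by blast
  have "M^2 * gav P E f \<le> M^2 * (\<Sum>s\<in>P. f s)" using g1 by (intro mult_left_mono) auto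
  moreover have "4 * M^2 * gav P E f \<le> 4 * M^2 * (\<Sum>s\<in>P. f s)" using g1 by (intro mult_left_mono) auto
  moreover have "0 \<le> M^2 * gav P E f" using g0 by simp
  ultimately show ?thesis using l u by (simp add: abs_le_iff)
qed

locale interp =
  fixes I :: "'i set" and K1 :: "'i set" and k0 :: 'i
    and P :: "'s set" and f :: "'s \<Rightarrow> real"
    and E0 :: "('i \<Rightarrow> real) \<Rightarrow> 's \<Rightarrow> real" and A :: "'i \<Rightarrow> 's \<Rightarrow> real"
    and B C :: "'s \<Rightarrow> real" and MA :: "'i \<Rightarrow> real" and MB MC :: real
  assumes finI: "finite I" and K1I: "K1 \<subseteq> I" and k0I: "k0 \<in> I" and k0K1: "k0 \<notin> K1"
    and finP: "finite P" and neP: "P \<noteq> {}" and fnn: "\<And>s. s \<in> P \<Longrightarrow> 0 \<le> f s"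
    and E0m: "\<And>s. (\<lambda>g. E0 g s) \<in> borel_measurable (Om I)"
    and E0upd: "\<And>g k y s. k \<in> insert k0 K1 \<Longrightarrow> E0 (g(k:=y)) s = E0 g s"
    and Abnd: "\<And>k s. k \<in> K1 \<Longrightarrow> s \<in> P \<Longrightarrow> \<bar>A k s\<bar> \<le> MA k"
    and Bbnd: "\<And>s. s \<in> P \<Longrightarrow> \<bar>B s\<bar> \<le> MB"
    and Cbnd: "\<And>s. s \<in> P \<Longrightarrow> \<bar>C s\<bar> \<le> MC"
begin

definition En :: "real \<Rightarrow> ('i \<Rightarrow> real) \<Rightarrow> 's \<Rightarrow> real" where
  "En t g s = E0 g s + sqrt t * (\<Sum>k\<in>K1. g k * A k s) + sqrt (1 - t) * (g k0 * B s) + (1 - t) * C s"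

definition Phi :: "real \<Rightarrow> ('i \<Rightarrow> real) \<Rightarrow> real" where
  "Phi t g = gav P (En t g) f"

definition u :: "real \<Rightarrow> real" where
  "u t = (\<integral>g. Phi t g \<partial>Om I)"

definition Ed :: "real \<Rightarrow> ('i \<Rightarrow> real) \<Rightarrow> 's \<Rightarrow> real" where
  "Ed t g s = (\<Sum>k\<in>K1. g k * A k s) / (2 * sqrt t) - g k0 * B s / (2 * sqrt (1 - t)) - C s"

definition Kc :: real where
  "Kc = (\<Sum>k\<in>K1. (MA k)^2) / 2 + 2 * MB^2 + 2 * MC"

definition Fs :: real where
  "Fs = (\<Sum>s\<in>P. f s)"

lemma finK1: "finite K1" using finite_subset[OF K1I finI] .

lemma MA_nn: "k \<in> K1 \<Longrightarrow> 0 \<le> MA k"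
proof -
  assume k: "k \<in> K1"
  obtain s where s: "s \<in> P" using neP by blast
  show ?thesis using Abnd[OF k s] abs_ge_zero[of "A k s"] by linarith
qed
lemma MB_nn: "0 \<le> MB"
proof -
  obtain s where s: "s \<in> P" using neP by blast
  show ?thesis using Bbnd[OF s] abs_ge_zero[of "B s"] by linarith
qed
lemma MC_nn: "0 \<le> MC"
proof -
  obtain s where s: "s \<in> P" using neP by blast
  show ?thesis using Cbnd[OF s] abs_ge_zero[of "C s"] by linarith
qed
lemma Kc_nn: "0 \<le> Kc"
  unfolding Kc_def using MB_nn MC_nn by (auto intro!: add_nonneg_nonneg sum_nonneg)

lemma En_meas: "(\<lambda>g. En t g s) \<in> borel_measurable (Om I)"
  unfolding En_def using E0m[of s] by measurable

lemma Ed_meas: "(\<lambda>g. Ed t g s) \<in> borel_measurable (Om I)"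
  unfolding Ed_def by measurable

lemma Phi_meas: "Phi t \<in> borel_measurable (Om I)"
proof -
  have "(\<lambda>g. gav P (En t g) f) \<in> borel_measurable (Om I)"
    by (rule gav_measurable) (rule En_meas, simp)
  then show ?thesis unfolding Phi_def[abs_def] .
qed

lemma Phi_nn: "0 \<le> Phi t g"
  unfolding Phi_def using finP neP fnn by (rule gav_nonneg)

lemma Phi_le: "Phi t g \<le> Fs"
  unfolding Phi_def Fs_def using finP neP fnn by (rule gav_le_sum)

lemma Phi_abs: "\<bar>Phi t g\<bar> \<le> Fs"
  using Phi_nn Phi_le by simp

lemma Phi_int: "integrable (Om I) (Phi t)"
  by (rule integrable_bounded_Om[OF Phi_meas Phi_abs])

lemma u_nn: "0 \<le> u t"
  unfolding u_def using Phi_nn by (simp add: Bochner_Integration.integral_nonneg)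

lemma u_cont: "continuous_on {0..1} u"
  unfolding u_def
proof (rule cont_under_integral)
  show "finite_measure (Om I)" using prob_Om by (rule prob_space.finite_measure)
  show "Phi x \<in> borel_measurable (Om I)" for x by (rule Phi_meas)
  show "\<bar>Phi x g\<bar> \<le> Fs" for x g by (rule Phi_abs)
  show "continuous_on {0..1} (\<lambda>x. Phi x g)" for g
    unfolding Phi_def
    by (intro gav_cont finP neP) (unfold En_def, intro continuous_intros)
qed


lemma En_deriv_t:
  assumes t: "0 < t" "t < 1"
  shows "((\<lambda>y. En y g s) has_real_derivative Ed t g s) (at t)"
proof -
  let ?S = "\<Sum>k\<in>K1. g k * A k s"
  have d1: "(sqrt has_real_derivative inverse (sqrt t) / 2) (at t)" using t by (intro DERIV_real_sqrt) simp
  have d2: "((\<lambda>y. sqrt (1 - y)) has_real_derivative (inverse (sqrt (1 - t)) / 2) * (- 1)) (at t)"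
    by (rule DERIV_chain2[OF DERIV_real_sqrt]) (use t in \<open>auto intro!: derivative_eq_intros\<close>)
  have "((\<lambda>y. E0 g s + sqrt y * ?S + sqrt (1 - y) * (g k0 * B s) + (1 - y) * C s) has_real_derivative
      0 + (inverse (sqrt t) / 2) * ?S + ((inverse (sqrt (1 - t)) / 2) * (- 1)) * (g k0 * B s) + (- 1) * C s) (at t)"
    by (intro DERIV_add DERIV_const d1 d2 DERIV_cmult_right)
       (auto intro!: derivative_eq_intros)
  moreover have "0 + (inverse (sqrt t) / 2) * ?S + ((inverse (sqrt (1 - t)) / 2) * (- 1)) * (g k0 * B s) + (- 1) * C s
      = Ed t g s"
    unfolding Ed_def by (simp add: field_simps)
  ultimately show ?thesis unfolding En_def by simp
qed

lemma Phi_deriv: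
  assumes t: "0 < t" "t < 1"
  shows "((\<lambda>x. Phi x g) has_real_derivative cov P (En t g) f (Ed t g)) (at t)"
  unfolding Phi_def cov_def
  by (rule gav_deriv[OF finP neP En_deriv_t[OF t]])

definition Gm :: "real \<Rightarrow> real \<Rightarrow> ('i \<Rightarrow> real) \<Rightarrow> real" where
  "Gm a b g = (\<Sum>k\<in>K1. \<bar>g k\<bar> * MA k) / (2 * sqrt a) + \<bar>g k0\<bar> * MB / (2 * sqrt (1 - b)) + MC"

lemma Ed_bnd:
  assumes "0 < a" "a < x" "x < b" "b < 1" "s \<in> P"
  shows "\<bar>Ed x g s\<bar> \<le> Gm a b g"
proof -
  have sa: "0 < sqrt a" "sqrt a \<le> sqrt x" using assms by auto
  have sb: "0 < sqrt (1 - b)" "sqrt (1 - b) \<le> sqrt (1 - x)" using assms by auto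
  have S: "\<bar>\<Sum>k\<in>K1. g k * A k s\<bar> \<le> (\<Sum>k\<in>K1. \<bar>g k\<bar> * MA k)"
  proof -
    have "\<bar>\<Sum>k\<in>K1. g k * A k s\<bar> \<le> (\<Sum>k\<in>K1. \<bar>g k * A k s\<bar>)" by (rule sum_abs)
    also have "\<dots> \<le> (\<Sum>k\<in>K1. \<bar>g k\<bar> * MA k)"
      using Abnd assms(5) by (auto intro!: sum_mono mult_left_mono simp: abs_mult)
    finally show ?thesis .
  qed
  have S0: "0 \<le> (\<Sum>k\<in>K1. \<bar>g k\<bar> * MA k)" using MA_nn by (auto intro!: sum_nonneg)
  have t1: "\<bar>(\<Sum>k\<in>K1. g k * A k s) / (2 * sqrt x)\<bar> \<le> (\<Sum>k\<in>K1. \<bar>g k\<bar> * MA k) / (2 * sqrt a)"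
  proof -
    have "\<bar>(\<Sum>k\<in>K1. g k * A k s) / (2 * sqrt x)\<bar> = \<bar>\<Sum>k\<in>K1. g k * A k s\<bar> / (2 * sqrt x)"
      using sa by (simp add: abs_divide)
    also have "\<dots> \<le> (\<Sum>k\<in>K1. \<bar>g k\<bar> * MA k) / (2 * sqrt x)"
      using S sa by (intro divide_right_mono) auto
    also have "\<dots> \<le> (\<Sum>k\<in>K1. \<bar>g k\<bar> * MA k) / (2 * sqrt a)"
      using S0 sa by (intro divide_left_mono) auto
    finally show ?thesis .
  qed
  have t2: "\<bar>g k0 * B s / (2 * sqrt (1 - x))\<bar> \<le> \<bar>g k0\<bar> * MB / (2 * sqrt (1 - b))"
  proof -
    have "\<bar>g k0 * B s / (2 * sqrt (1 - x))\<bar> = \<bar>g k0\<bar> * \<bar>B s\<bar> / (2 * sqrt (1 - x))"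
      using sb by (simp add: abs_divide abs_mult)
    also have "\<dots> \<le> \<bar>g k0\<bar> * MB / (2 * sqrt (1 - x))"
      using Bbnd[OF assms(5)] sb by (intro divide_right_mono mult_left_mono) auto
    also have "\<dots> \<le> \<bar>g k0\<bar> * MB / (2 * sqrt (1 - b))"
      using MB_nn sb by (intro divide_left_mono) auto
    finally show ?thesis .
  qed
  have t3: "\<bar>C s\<bar> \<le> MC" by (rule Cbnd[OF assms(5)])
  show ?thesis unfolding Ed_def Gm_def using t1 t2 t3 by linarith
qed

lemma Gm_int: "integrable (Om I) (Gm a b)"
proof -
  have "integrable (Om I) (\<lambda>g. (\<Sum>k\<in>K1. \<bar>g k\<bar> * MA k) / (2 * sqrt a) + \<bar>g k0\<bar> * MB / (2 * sqrt (1 - b)) + MC)"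
  proof (intro Bochner_Integration.integrable_add integrable_divide_zero Bochner_Integration.integrable_sum
      integrable_mult_left)
    show "integrable (Om I) (\<lambda>g. \<bar>g k\<bar>)" if "k \<in> K1" for k
      using that K1I by (intro integrable_comp_abs) auto
    show "integrable (Om I) (\<lambda>g. \<bar>g k0\<bar>)" using k0I by (rule integrable_comp_abs)
    show "integrable (Om I) (\<lambda>g. MC)"
      using prob_space.finite_measure[OF prob_Om] finite_measure.integrable_const by blast
  qed
  then show ?thesis unfolding Gm_def[abs_def] .
qed

lemma u_deriv:
  assumes t: "0 < t" "t < 1"
  shows "(u has_real_derivative (\<integral>g. cov P (En t g) f (Ed t g) \<partial>Om I)) (at t)"
proof -
  define a where "a = t / 2"
  define b where "b = (1 + t) / 2"
  have ab: "0 < a" "a < t" "t < b" "b < 1" using t by (auto simp: a_def b_def)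
  show ?thesis unfolding u_def
  proof (rule deriv_under_integral[where a = a and b = b and G = "\<lambda>g. 2 * Gm a b g * Fs"])
    show "a < t" "t < b" using ab by auto
    show "integrable (Om I) (Phi x)" for x by (rule Phi_int)
    show "((\<lambda>x. Phi x g) has_real_derivative cov P (En x g) f (Ed x g)) (at x)" if "x \<in> {a<..<b}" for x g
      using that ab by (intro Phi_deriv) auto
    show "(\<lambda>g. cov P (En t g) f (Ed t g)) \<in> borel_measurable (Om I)"
      by (intro cov_measurable En_meas Ed_meas)
    show "integrable (Om I) (\<lambda>g. 2 * Gm a b g * Fs)"
      using Gm_int by (intro integrable_mult_left integrable_mult_right) auto
    show "\<bar>cov P (En x g) f (Ed x g)\<bar> \<le> 2 * Gm a b g * Fs" if "x \<in> {a<..<b}" for x g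
      unfolding Fs_def
      by (rule cov_abs[OF finP neP fnn]) (use that ab Ed_bnd in auto)
  qed
qed


lemma En_upd_K1:
  assumes k: "k \<in> K1"
  shows "En t (g(k:=y)) = (\<lambda>s. (En t g s - g k * (sqrt t * A k s)) + y * (sqrt t * A k s))"
proof
  fix s
  have k0k: "k0 \<noteq> k" using k k0K1 by auto
  have "E0 (g(k:=y)) s = E0 g s" using k by (intro E0upd) auto
  moreover have "(\<Sum>k'\<in>K1. (g(k:=y)) k' * A k' s) = (\<Sum>k'\<in>K1. g k' * A k' s) + (y - g k) * A k s"
    by (rule sum_upd[OF finK1 k])
  moreover have "(g(k:=y)) k0 = g k0" using k0k by simp
  ultimately have "En t (g(k:=y)) s = E0 g s + sqrt t * ((\<Sum>k'\<in>K1. g k' * A k' s) + (y - g k) * A k s)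
     + sqrt (1 - t) * (g k0 * B s) + (1 - t) * C s"
    by (simp only: En_def)
  then show "En t (g(k:=y)) s = (En t g s - g k * (sqrt t * A k s)) + y * (sqrt t * A k s)"
    by (simp only: En_def) (simp add: algebra_simps)
qed

lemma En_upd_k0:
  shows "En t (g(k0:=y)) = (\<lambda>s. (En t g s - g k0 * (sqrt (1 - t) * B s)) + y * (sqrt (1 - t) * B s))"
proof
  fix s
  have "E0 (g(k0:=y)) s = E0 g s" by (intro E0upd) auto
  moreover have "(\<Sum>k'\<in>K1. (g(k0:=y)) k' * A k' s) = (\<Sum>k'\<in>K1. g k' * A k' s)"
    by (rule sum_upd_notin[OF k0K1])
  ultimately have "En t (g(k0:=y)) s = E0 g s + sqrt t * (\<Sum>k'\<in>K1. g k' * A k' s)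
     + sqrt (1 - t) * (y * B s) + (1 - t) * C s"
    by (simp only: En_def fun_upd_same)
  then show "En t (g(k0:=y)) s = (En t g s - g k0 * (sqrt (1 - t) * B s)) + y * (sqrt (1 - t) * B s)"
    by (simp only: En_def) (simp add: algebra_simps)
qed

lemma ibp_K1:
  assumes k: "k \<in> K1"
  shows "(\<integral>g. g k * cov P (En t g) f (A k) \<partial>Om I) = (\<integral>g. sqrt t * Vf P (En t g) f (A k) \<partial>Om I)"
proof (rule prod_gauss_ibp[OF finI])
  show "k \<in> I" using k K1I by auto
  show "(\<lambda>g. cov P (En t g) f (A k)) \<in> borel_measurable (Om I)"
    by (intro cov_measurable En_meas) simp
  show "(\<lambda>g. sqrt t * Vf P (En t g) f (A k)) \<in> borel_measurable (Om I)"
    by (intro borel_measurable_times borel_measurable_const Vf_measurable En_meas)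
  show "\<bar>cov P (En t g) f (A k)\<bar> \<le> 2 * MA k * Fs" for g
    unfolding Fs_def by (rule cov_abs[OF finP neP fnn Abnd[OF k]])
  show "\<bar>sqrt t * Vf P (En t g) f (A k)\<bar> \<le> \<bar>sqrt t\<bar> * (4 * (MA k)^2 * Fs)" for g
    unfolding abs_mult Fs_def
    by (intro mult_left_mono Vf_abs[OF finP neP fnn]) (auto intro: Abnd[OF k])
  show "((\<lambda>y. cov P (En t (g(k:=y))) f (A k)) has_real_derivative sqrt t * Vf P (En t (g(k:=y))) f (A k)) (at y)" for g y
    unfolding En_upd_K1[OF k] by (rule cov_deriv_dir[OF finP neP])
  show "continuous_on UNIV (\<lambda>y. sqrt t * Vf P (En t (g(k:=y))) f (A k))" for g
    unfolding En_upd_K1[OF k] by (intro continuous_on_mult continuous_on_const cont_cov_dir[OF finP neP])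
qed

lemma ibp_k0:
  shows "(\<integral>g. g k0 * cov P (En t g) f B \<partial>Om I) = (\<integral>g. sqrt (1 - t) * Vf P (En t g) f B \<partial>Om I)"
proof (rule prod_gauss_ibp[OF finI k0I])
  show "(\<lambda>g. cov P (En t g) f B) \<in> borel_measurable (Om I)"
    by (intro cov_measurable En_meas) simp
  show "(\<lambda>g. sqrt (1 - t) * Vf P (En t g) f B) \<in> borel_measurable (Om I)"
    by (intro borel_measurable_times borel_measurable_const Vf_measurable En_meas)
  show "\<bar>cov P (En t g) f B\<bar> \<le> 2 * MB * Fs" for g
    unfolding Fs_def by (rule cov_abs[OF finP neP fnn Bbnd])
  show "\<bar>sqrt (1 - t) * Vf P (En t g) f B\<bar> \<le> \<bar>sqrt (1 - t)\<bar> * (4 * MB^2 * Fs)" for g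
    unfolding abs_mult Fs_def
    by (intro mult_left_mono Vf_abs[OF finP neP fnn]) (auto intro: Bbnd)
  show "((\<lambda>y. cov P (En t (g(k0:=y))) f B) has_real_derivative sqrt (1 - t) * Vf P (En t (g(k0:=y))) f B) (at y)" for g y
    unfolding En_upd_k0 by (rule cov_deriv_dir[OF finP neP])
  show "continuous_on UNIV (\<lambda>y. sqrt (1 - t) * Vf P (En t (g(k0:=y))) f B)" for g
    unfolding En_upd_k0 by (intro continuous_on_mult continuous_on_const cont_cov_dir[OF finP neP])
qed


lemma cov_Ed:
  "cov P E f (Ed t g) = (\<Sum>k\<in>K1. (1 / (2 * sqrt t)) * (g k * cov P E f (A k)))
      - (1 / (2 * sqrt (1 - t))) * (g k0 * cov P E f B) - cov P E f C"
proof -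
  have "Ed t g = (\<lambda>s. (\<Sum>k\<in>K1. (g k / (2 * sqrt t)) * A k s) - (g k0 / (2 * sqrt (1 - t))) * B s - C s)"
    unfolding Ed_def by (rule ext) (simp add: sum_divide_distrib)
  then have "cov P E f (Ed t g) = (\<Sum>k\<in>K1. (g k / (2 * sqrt t)) * cov P E f (A k))
      - (g k0 / (2 * sqrt (1 - t))) * cov P E f B - cov P E f C"
    by (simp only: cov_diff2 cov_sum2 cov_cmult2)
  then show ?thesis by simp
qed

lemma Vf_int: "integrable (Om I) (\<lambda>g. Vf P (En t g) f h)" if "\<And>s. s \<in> P \<Longrightarrow> \<bar>h s\<bar> \<le> M" for h M
  by (rule integrable_bounded_Om[OF Vf_measurable[OF En_meas] Vf_abs[OF finP neP fnn that]])

lemma cov_int: "integrable (Om I) (\<lambda>g. cov P (En t g) f h)" if "\<And>s. s \<in> P \<Longrightarrow> \<bar>h s\<bar> \<le> M" for h M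
  by (rule integrable_bounded_Om[OF cov_measurable[OF En_meas] cov_abs[OF finP neP fnn that]]) simp

lemma covk_int: "integrable (Om I) (\<lambda>g. g k * cov P (En t g) f h)"
  if "k \<in> I" "\<And>s. s \<in> P \<Longrightarrow> \<bar>h s\<bar> \<le> M" for h M k
  by (rule integrable_comp_mult[OF that(1) cov_measurable[OF En_meas] cov_abs[OF finP neP fnn that(2)]]) simp

lemma D_eq:
  assumes t: "0 < t" "t < 1"
  shows "(\<integral>g. cov P (En t g) f (Ed t g) \<partial>Om I)
     = (\<Sum>k\<in>K1. (\<integral>g. Vf P (En t g) f (A k) \<partial>Om I)) / 2 - (\<integral>g. Vf P (En t g) f B \<partial>Om I) / 2
       - (\<integral>g. cov P (En t g) f C \<partial>Om I)"
proof -
  let ?cA = "\<lambda>k g. cov P (En t g) f (A k)"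
  let ?cB = "\<lambda>g. cov P (En t g) f B"
  let ?cC = "\<lambda>g. cov P (En t g) f C"
  have iA: "integrable (Om I) (\<lambda>g. g k * ?cA k g)" if "k \<in> K1" for k
    using that K1I Abnd[OF that] by (intro covk_int) auto
  have iB: "integrable (Om I) (\<lambda>g. g k0 * ?cB g)"
    using k0I Bbnd by (intro covk_int) auto
  have iC: "integrable (Om I) ?cC"
    using Cbnd by (intro cov_int) auto
  have iS: "integrable (Om I) (\<lambda>g. \<Sum>k\<in>K1. (1 / (2 * sqrt t)) * (g k * ?cA k g))"
    using iA by (intro Bochner_Integration.integrable_sum integrable_mult_right) auto
  have "(\<integral>g. cov P (En t g) f (Ed t g) \<partial>Om I)
      = (\<integral>g. (\<Sum>k\<in>K1. (1 / (2 * sqrt t)) * (g k * ?cA k g)) - (1 / (2 * sqrt (1 - t))) * (g k0 * ?cB g) - ?cC g \<partial>Om I)"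
    by (simp only: cov_Ed)
  also have "\<dots> = (\<integral>g. (\<Sum>k\<in>K1. (1 / (2 * sqrt t)) * (g k * ?cA k g)) \<partial>Om I)
      - (\<integral>g. (1 / (2 * sqrt (1 - t))) * (g k0 * ?cB g) \<partial>Om I) - (\<integral>g. ?cC g \<partial>Om I)"
    using iS iB iC by (simp add: Bochner_Integration.integral_diff)
  also have "(\<integral>g. (\<Sum>k\<in>K1. (1 / (2 * sqrt t)) * (g k * ?cA k g)) \<partial>Om I)
      = (\<Sum>k\<in>K1. (1 / (2 * sqrt t)) * (\<integral>g. g k * ?cA k g \<partial>Om I))"
    using iA by (subst Bochner_Integration.integral_sum) (auto simp: integral_mult_right_zero)
  also have "\<dots> = (\<Sum>k\<in>K1. (1 / (2 * sqrt t)) * (sqrt t * (\<integral>g. Vf P (En t g) f (A k) \<partial>Om I)))"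
    by (intro sum.cong refl) (simp add: ibp_K1)
  also have "\<dots> = (\<Sum>k\<in>K1. (\<integral>g. Vf P (En t g) f (A k) \<partial>Om I)) / 2"
    using t by (simp add: sum_divide_distrib)
  also have "(\<integral>g. (1 / (2 * sqrt (1 - t))) * (g k0 * ?cB g) \<partial>Om I)
      = (1 / (2 * sqrt (1 - t))) * (sqrt (1 - t) * (\<integral>g. Vf P (En t g) f B \<partial>Om I))"
    by (simp add: ibp_k0)
  also have "\<dots> = (\<integral>g. Vf P (En t g) f B \<partial>Om I) / 2"
    using t by simp
  finally show ?thesis .
qed

lemma D_lower:
  assumes t: "0 < t" "t < 1"
  shows "- Kc * u t \<le> (\<integral>g. cov P (En t g) f (Ed t g) \<partial>Om I)"
proof -
  have a: "- ((MA k)^2 * u t) \<le> (\<integral>g. Vf P (En t g) f (A k) \<partial>Om I)" if k: "k \<in> K1" for k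
  proof -
    have "(\<integral>g. - ((MA k)^2 * Phi t g) \<partial>Om I) \<le> (\<integral>g. Vf P (En t g) f (A k) \<partial>Om I)"
    proof (rule integral_mono)
      show "integrable (Om I) (\<lambda>g. - ((MA k)^2 * Phi t g))" using Phi_int by auto
      show "integrable (Om I) (\<lambda>g. Vf P (En t g) f (A k))" using Abnd[OF k] by (rule Vf_int)
      show "- ((MA k)^2 * Phi t g) \<le> Vf P (En t g) f (A k)" for g
        unfolding Phi_def by (rule Vf_lower[OF finP neP fnn Abnd[OF k]])
    qed
    then show ?thesis unfolding u_def by simp
  qed
  have b: "(\<integral>g. Vf P (En t g) f B \<partial>Om I) \<le> 4 * MB^2 * u t"
  proof -
    have "(\<integral>g. Vf P (En t g) f B \<partial>Om I) \<le> (\<integral>g. 4 * MB^2 * Phi t g \<partial>Om I)"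
    proof (rule integral_mono)
      show "integrable (Om I) (\<lambda>g. 4 * MB^2 * Phi t g)" using Phi_int by auto
      show "integrable (Om I) (\<lambda>g. Vf P (En t g) f B)" using Bbnd by (rule Vf_int)
      show "Vf P (En t g) f B \<le> 4 * MB^2 * Phi t g" for g
        unfolding Phi_def by (rule Vf_upper[OF finP neP fnn Bbnd])
    qed
    then show ?thesis unfolding u_def by simp
  qed
  have c: "(\<integral>g. cov P (En t g) f C \<partial>Om I) \<le> 2 * MC * u t"
  proof -
    have "(\<integral>g. cov P (En t g) f C \<partial>Om I) \<le> (\<integral>g. 2 * MC * Phi t g \<partial>Om I)"
    proof (rule integral_mono)
      show "integrable (Om I) (\<lambda>g. 2 * MC * Phi t g)" using Phi_int by auto
      show "integrable (Om I) (\<lambda>g. cov P (En t g) f C)" using Cbnd by (rule cov_int)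
      show "cov P (En t g) f C \<le> 2 * MC * Phi t g" for g
        unfolding Phi_def by (rule cov_upper[OF finP neP fnn Cbnd])
    qed
    then show ?thesis unfolding u_def by simp
  qed
  have "(\<Sum>k\<in>K1. - ((MA k)^2 * u t)) \<le> (\<Sum>k\<in>K1. (\<integral>g. Vf P (En t g) f (A k) \<partial>Om I))"
    using a by (rule sum_mono)
  then have "- ((\<Sum>k\<in>K1. (MA k)^2) * u t) \<le> (\<Sum>k\<in>K1. (\<integral>g. Vf P (En t g) f (A k) \<partial>Om I))"
    by (simp add: sum_distrib_right sum_negf)
  then show ?thesis
    unfolding D_eq[OF t] Kc_def using b c by (simp add: algebra_simps)
qed

lemma u_bound:
  assumes t: "0 \<le> t" "t \<le> 1"
  shows "u t \<le> exp (Kc * (1 - t)) * u 1"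
proof -
  define w where "w x = exp (Kc * x) * u x" for x
  have "w t \<le> w 1"
  proof (rule DERIV_nonneg_imp_increasing_open[OF t(2)])
    fix x assume x: "t < x" "x < 1"
    then have x01: "0 < x" "x < 1" using t by auto
    have "(w has_real_derivative exp (Kc * x) * Kc * u x + exp (Kc * x) * (\<integral>g. cov P (En x g) f (Ed x g) \<partial>Om I)) (at x)"
      unfolding w_def[abs_def]
      by (rule derivative_eq_intros u_deriv[OF x01] refl | simp)+
    moreover have "0 \<le> exp (Kc * x) * Kc * u x + exp (Kc * x) * (\<integral>g. cov P (En x g) f (Ed x g) \<partial>Om I)"
    proof -
      have "0 \<le> Kc * u x + (\<integral>g. cov P (En x g) f (Ed x g) \<partial>Om I)" using D_lower[OF x01] by simp
      then have "0 \<le> exp (Kc * x) * (Kc * u x + (\<integral>g. cov P (En x g) f (Ed x g) \<partial>Om I))" by simp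
      then show ?thesis by (simp add: algebra_simps)
    qed
    ultimately show "\<exists>y. (w has_real_derivative y) (at x) \<and> 0 \<le> y" by blast
  next
    show "continuous_on {t..1} w"
      unfolding w_def[abs_def]
      by (intro continuous_intros continuous_on_subset[OF u_cont]) (use t in auto)
  qed
  then have "exp (Kc * t) * u t \<le> exp (Kc * 1) * u 1" by (simp add: w_def)
  then have "exp (- (Kc * t)) * (exp (Kc * t) * u t) \<le> exp (- (Kc * t)) * (exp (Kc * 1) * u 1)"
    by (intro mult_left_mono) auto
  then show ?thesis by (simp add: mult.assoc[symmetric] exp_add[symmetric] algebra_simps)
qed

end


lemma int_le_const:
  fixes F :: "'a \<Rightarrow> real"
  assumes "prob_space M" "\<And>x. x \<in> space M \<Longrightarrow> F x \<le> c" "0 \<le> c"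
  shows "integral\<^sup>L M F \<le> c"
proof (cases "integrable M F")
  case True
  interpret prob_space M by fact
  have "integral\<^sup>L M F \<le> integral\<^sup>L M (\<lambda>_. c)"
    using True assms(2) by (intro integral_mono) auto
  then show ?thesis by (simp add: prob_space)
next
  case False
  then show ?thesis using assms(3) by (simp add: not_integrable_integral_eq)
qed

lemma int_ge_0:
  fixes F :: "'a \<Rightarrow> real"
  assumes "\<And>x. x \<in> space M \<Longrightarrow> 0 \<le> F x"
  shows "0 \<le> integral\<^sup>L M F"
  using assms by (rule Bochner_Integration.integral_nonneg)

lemma abs_sinh_le_cosh: "\<bar>sinh (x::real)\<bar> \<le> cosh x"
proof -
  have "sinh x \<le> cosh x" by (rule sinh_le_cosh_real)
  moreover have "- sinh x \<le> cosh x" using sinh_le_cosh_real[of "- x"] by simp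
  ultimately show ?thesis by simp
qed

lemma fp_bounds:
  assumes S: "S \<ge> 1" and fp: "fp_system S \<beta> D h p q"
  shows "0 \<le> p" "p \<le> (real S)^2" "0 \<le> q" "q \<le> (real S)^2"
proof -
  define e where "e \<gamma> x = 2 * cosh (real \<gamma> * (sqrt q * \<beta> * x + h)) * exp ((real \<gamma>)\<^sup>2 * (D + \<beta>\<^sup>2 / 2 * (p - q)))" for \<gamma> x
  have e_pos: "0 < e \<gamma> x" for \<gamma> x unfolding e_def by simp
  have den: "fp_denom S \<beta> D h p q x = 1 + (\<Sum>\<gamma>\<in>{1..S}. e \<gamma> x)" for x
    unfolding fp_denom_def e_def by simp
  have den_pos: "0 < fp_denom S \<beta> D h p q x" for x
    unfolding den using e_pos by (smt (verit) sum_nonneg)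
  define Rp where "Rp x = (\<Sum>\<gamma>\<in>{1..S}. (real \<gamma>)\<^sup>2 * 2 * cosh (real \<gamma> * (sqrt q * \<beta> * x + h))
                         * exp ((real \<gamma>)\<^sup>2 * (D + \<beta>\<^sup>2 / 2 * (p - q)))) / fp_denom S \<beta> D h p q x" for x
  define Rq where "Rq x = (\<Sum>\<gamma>\<in>{1..S}. real \<gamma> * 2 * sinh (real \<gamma> * (sqrt q * \<beta> * x + h))
                         * exp ((real \<gamma>)\<^sup>2 * (D + \<beta>\<^sup>2 / 2 * (p - q)))) / fp_denom S \<beta> D h p q x" for x
  have pe: "p = integral\<^sup>L std_gauss Rp" and qe: "q = integral\<^sup>L std_gauss (\<lambda>x. (Rq x)\<^sup>2)"
    using fp unfolding fp_system_def Rp_def Rq_def by auto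
  have Rp_b: "0 \<le> Rp x \<and> Rp x \<le> (real S)^2" for x
  proof -
    have n: "(\<Sum>\<gamma>\<in>{1..S}. (real \<gamma>)\<^sup>2 * 2 * cosh (real \<gamma> * (sqrt q * \<beta> * x + h))
                         * exp ((real \<gamma>)\<^sup>2 * (D + \<beta>\<^sup>2 / 2 * (p - q)))) = (\<Sum>\<gamma>\<in>{1..S}. (real \<gamma>)\<^sup>2 * e \<gamma> x)"
      unfolding e_def by (simp add: mult_ac)
    have n0: "0 \<le> (\<Sum>\<gamma>\<in>{1..S}. (real \<gamma>)\<^sup>2 * e \<gamma> x)" using e_pos by (intro sum_nonneg) (simp add: less_imp_le)
    have n1: "(\<Sum>\<gamma>\<in>{1..S}. (real \<gamma>)\<^sup>2 * e \<gamma> x) \<le> (\<Sum>\<gamma>\<in>{1..S}. (real S)\<^sup>2 * e \<gamma> x)"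
      using e_pos by (intro sum_mono mult_right_mono) (auto simp: less_imp_le)
    have n2: "(\<Sum>\<gamma>\<in>{1..S}. (real S)\<^sup>2 * e \<gamma> x) \<le> (real S)\<^sup>2 * fp_denom S \<beta> D h p q x"
      unfolding den by (simp add: sum_distrib_left[symmetric] distrib_left)
    show ?thesis unfolding Rp_def n using n0 n1 n2 den_pos[of x]
      by (simp add: divide_le_eq)
  qed
  have Rq_b: "(Rq x)\<^sup>2 \<le> (real S)^2" for x
  proof -
    have n1: "\<bar>\<Sum>\<gamma>\<in>{1..S}. real \<gamma> * 2 * sinh (real \<gamma> * (sqrt q * \<beta> * x + h))
                         * exp ((real \<gamma>)\<^sup>2 * (D + \<beta>\<^sup>2 / 2 * (p - q)))\<bar> \<le> (\<Sum>\<gamma>\<in>{1..S}. real S * e \<gamma> x)"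
    proof -
      have "\<bar>\<Sum>\<gamma>\<in>{1..S}. real \<gamma> * 2 * sinh (real \<gamma> * (sqrt q * \<beta> * x + h))
                         * exp ((real \<gamma>)\<^sup>2 * (D + \<beta>\<^sup>2 / 2 * (p - q)))\<bar>
          \<le> (\<Sum>\<gamma>\<in>{1..S}. \<bar>real \<gamma> * 2 * sinh (real \<gamma> * (sqrt q * \<beta> * x + h))
                         * exp ((real \<gamma>)\<^sup>2 * (D + \<beta>\<^sup>2 / 2 * (p - q)))\<bar>)" by (rule sum_abs)
      also have "\<dots> \<le> (\<Sum>\<gamma>\<in>{1..S}. real S * e \<gamma> x)"
      proof (rule sum_mono)
        fix \<gamma> assume g: "\<gamma> \<in> {1..S}"
        have "\<bar>real \<gamma> * 2 * sinh (real \<gamma> * (sqrt q * \<beta> * x + h)) * exp ((real \<gamma>)\<^sup>2 * (D + \<beta>\<^sup>2 / 2 * (p - q)))\<bar>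
           = real \<gamma> * (2 * \<bar>sinh (real \<gamma> * (sqrt q * \<beta> * x + h))\<bar> * exp ((real \<gamma>)\<^sup>2 * (D + \<beta>\<^sup>2 / 2 * (p - q))))"
          by (simp add: abs_mult)
        also have "\<dots> \<le> real S * e \<gamma> x"
          unfolding e_def using g abs_sinh_le_cosh
          by (intro mult_mono) (auto intro!: mult_right_mono)
        finally show "\<bar>real \<gamma> * 2 * sinh (real \<gamma> * (sqrt q * \<beta> * x + h)) * exp ((real \<gamma>)\<^sup>2 * (D + \<beta>\<^sup>2 / 2 * (p - q)))\<bar> \<le> real S * e \<gamma> x" .
      qed
      finally show ?thesis .
    qed
    have n2: "(\<Sum>\<gamma>\<in>{1..S}. real S * e \<gamma> x) \<le> real S * fp_denom S \<beta> D h p q x"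
      unfolding den by (simp add: sum_distrib_left[symmetric] distrib_left)
    have "\<bar>Rq x\<bar> \<le> real S"
      unfolding Rq_def using n1 n2 den_pos[of x] by (simp add: abs_divide divide_le_eq)
    then show ?thesis by (metis abs_ge_zero power2_abs power_mono)
  qed
  show "0 \<le> p" unfolding pe using Rp_b by (intro int_ge_0) auto
  show "p \<le> (real S)^2" unfolding pe using Rp_b by (intro int_le_const std_gauss_prob) auto
  show "0 \<le> q" unfolding qe by (intro int_ge_0) auto
  show "q \<le> (real S)^2" unfolding qe using Rq_b by (intro int_le_const std_gauss_prob) auto
qed

lemma gibbs_gav:
  assumes "finite C"
  shows "gibbs_avg C H n f = gav (PiE {1..n} (\<lambda>_. C)) (\<lambda>\<sigma>s. \<Sum>l\<in>{1..n}. H (\<sigma>s l)) f"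
proof -
  have num: "(\<Prod>l\<in>{1..n}. exp (H (\<sigma>s l))) = exp (\<Sum>l\<in>{1..n}. H (\<sigma>s l))" for \<sigma>s :: "nat \<Rightarrow> nat \<Rightarrow> int"
    by (simp add: exp_sum)
  have "(\<Sum>\<sigma>\<in>C. exp (H \<sigma>)) ^ n = (\<Prod>l\<in>{1..n}. \<Sum>\<sigma>\<in>C. exp (H \<sigma>))"
    by simp
  also have "\<dots> = (\<Sum>\<sigma>s\<in>PiE {1..n} (\<lambda>_. C). \<Prod>l\<in>{1..n}. exp (H (\<sigma>s l)))"
    using assms by (intro prod_sum_PiE) auto
  finally have den: "(\<Sum>\<sigma>\<in>C. exp (H \<sigma>)) ^ n = (\<Sum>\<sigma>s\<in>PiE {1..n} (\<lambda>_. C). exp (\<Sum>l\<in>{1..n}. H (\<sigma>s l)))"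
    by (simp only: num)
  show ?thesis unfolding gibbs_avg_def gav_def den num ..
qed

definition E0i :: "real \<Rightarrow> real \<Rightarrow> real \<Rightarrow> nat \<Rightarrow> nat \<Rightarrow> ((nat \<times> nat) option \<Rightarrow> real) \<Rightarrow> (nat \<Rightarrow> nat \<Rightarrow> int) \<Rightarrow> real" where
  "E0i \<beta> D h N n g \<sigma>s = (\<Sum>l\<in>{1..n}.
     (\<beta> / sqrt N) * (\<Sum>(i, j)\<in>pairs (N - 1). g (Some (i, j)) * \<sigma>s l i * \<sigma>s l j)
     + D * (\<Sum>i\<in>{1..N - 1}. (\<sigma>s l i)\<^sup>2) + h * (\<Sum>i\<in>{1..N - 1}. \<sigma>s l i)
     + D * (\<sigma>s l N)\<^sup>2 + h * \<sigma>s l N)"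

definition Ai :: "real \<Rightarrow> nat \<Rightarrow> nat \<Rightarrow> (nat \<times> nat) option \<Rightarrow> (nat \<Rightarrow> nat \<Rightarrow> int) \<Rightarrow> real" where
  "Ai \<beta> N n k \<sigma>s = (case k of Some (i, j) \<Rightarrow> (\<Sum>l\<in>{1..n}. (\<beta> / sqrt N) * \<sigma>s l N * \<sigma>s l i) | None \<Rightarrow> 0)"

definition Bi :: "real \<Rightarrow> real \<Rightarrow> nat \<Rightarrow> nat \<Rightarrow> (nat \<Rightarrow> nat \<Rightarrow> int) \<Rightarrow> real" where
  "Bi \<beta> q N n \<sigma>s = (\<Sum>l\<in>{1..n}. \<beta> * sqrt q * \<sigma>s l N)"

definition Ci :: "real \<Rightarrow> real \<Rightarrow> real \<Rightarrow> nat \<Rightarrow> nat \<Rightarrow> (nat \<Rightarrow> nat \<Rightarrow> int) \<Rightarrow> real" where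
  "Ci \<beta> p q N n \<sigma>s = (\<Sum>l\<in>{1..n}. (\<beta>\<^sup>2 / 2) * (p - q) * (\<sigma>s l N)\<^sup>2)"

definition K1i :: "nat \<Rightarrow> (nat \<times> nat) option set" where
  "K1i N = (\<lambda>i. Some (i, N)) ` {1..<N}"

lemma sumK1:
  "(\<Sum>k\<in>K1i N. g k * Ai \<beta> N n k \<sigma>s) = (\<Sum>l\<in>{1..n}. \<sigma>s l N * ((\<beta> / sqrt N) * (\<Sum>i\<in>{1..<N}. g (Some (i, N)) * \<sigma>s l i)))"
proof -
  have inj: "inj_on (\<lambda>i. Some (i, N)) {1..<N}" by (auto simp: inj_on_def)
  have "(\<Sum>k\<in>K1i N. g k * Ai \<beta> N n k \<sigma>s) = (\<Sum>i\<in>{1..<N}. g (Some (i, N)) * Ai \<beta> N n (Some (i, N)) \<sigma>s)"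
    unfolding K1i_def by (subst sum.reindex[OF inj]) (simp add: o_def)
  also have "\<dots> = (\<Sum>i\<in>{1..<N}. \<Sum>l\<in>{1..n}. g (Some (i, N)) * ((\<beta> / sqrt N) * \<sigma>s l N * \<sigma>s l i))"
    by (simp add: Ai_def sum_distrib_left)
  also have "\<dots> = (\<Sum>l\<in>{1..n}. \<Sum>i\<in>{1..<N}. g (Some (i, N)) * ((\<beta> / sqrt N) * \<sigma>s l N * \<sigma>s l i))"
    by (rule sum.swap)
  also have "\<dots> = (\<Sum>l\<in>{1..n}. \<sigma>s l N * ((\<beta> / sqrt N) * (\<Sum>i\<in>{1..<N}. g (Some (i, N)) * \<sigma>s l i)))"
    by (simp add: sum_distrib_left mult_ac)
  finally show ?thesis .
qed

lemma Hsum: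
  "(\<Sum>l\<in>{1..n}. H_t \<beta> D h p q N t g (\<sigma>s l)) =
     E0i \<beta> D h N n g \<sigma>s + sqrt t * (\<Sum>k\<in>K1i N. g k * Ai \<beta> N n k \<sigma>s)
     + sqrt (1 - t) * (g None * Bi \<beta> q N n \<sigma>s) + (1 - t) * Ci \<beta> p q N n \<sigma>s"
  unfolding sumK1 H_t_def E0i_def Bi_def Ci_def
  by (simp add: sum.distrib sum_distrib_left algebra_simps)

lemma finite_pairs: "finite (pairs N)"
proof -
  have "pairs N \<subseteq> {1..N} \<times> {1..N}" by (auto simp: pairs_def)
  then show ?thesis by (rule finite_subset) auto
qed

lemma spin_bound:
  assumes "\<sigma>s \<in> replicas S N n" "l \<in> {1..n}" "j \<in> {1..N}"
  shows "\<bar>real_of_int (\<sigma>s l j)\<bar> \<le> real S"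
proof -
  have "\<sigma>s l \<in> configs S N" using assms(1,2) by (auto simp: replicas_def)
  then have "\<sigma>s l j \<in> spins S" using assms(3) by (auto simp: configs_def)
  then have "\<bar>\<sigma>s l j\<bar> \<le> int S" by (auto simp: spins_def)
  then show ?thesis by linarith
qed

lemma replicas_finite: "finite (replicas S N n)"
  unfolding replicas_def configs_def spins_def by (intro finite_PiE) auto

lemma replicas_ne: "replicas S N n \<noteq> {}"
  unfolding replicas_def configs_def spins_def by (auto simp: PiE_eq_empty_iff)

lemma sum_bound_n:
  fixes F :: "nat \<Rightarrow> real"
  assumes "\<And>l. l \<in> {1..n} \<Longrightarrow> \<bar>F l\<bar> \<le> M"
  shows "\<bar>\<Sum>l\<in>{1..n}. F l\<bar> \<le> real n * M"
proof -
  have "\<bar>\<Sum>l\<in>{1..n}. F l\<bar> \<le> (\<Sum>l\<in>{1..n}. \<bar>F l\<bar>)" by (rule sum_abs)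
  also have "\<dots> \<le> (\<Sum>l\<in>{1..n}. M)" using assms by (intro sum_mono) auto
  finally show ?thesis by simp
qed

theorem lemma4:
  fixes S N n :: nat and \<beta> D h p q t :: real
    and f :: "(nat \<Rightarrow> nat \<Rightarrow> int) \<Rightarrow> real"
  assumes "S \<ge> 1" and "N \<ge> 1" and "\<beta> \<ge> 0" and "h \<ge> 0"
    and "fp_system S \<beta> D h p q"
    and "\<forall>p' q'. fp_system S \<beta> D h p' q' \<longrightarrow> p' = p \<and> q' = q"
    and "n \<ge> 1" and "0 \<le> t" and "t \<le> 1"
    and "\<forall>\<sigma>s\<in>replicas S N n. f \<sigma>s \<ge> 0"
  shows "nu_t S \<beta> D h p q N t n f
           \<le> exp (6 * (real n)\<^sup>2 * \<beta>\<^sup>2 * (real S)^4) * nu_t S \<beta> D h p q N 1 n f"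
proof -
  note S1 = assms(1) and N1 = assms(2) and b0 = assms(3) and n1 = assms(7) and t0 = assms(8) and t1 = assms(9)
  note pb = fp_bounds[OF assms(1) assms(5)]
  define I where "I = insert None (Some ` pairs N)"
  define P where "P = replicas S N n"
  define MA where "MA k = real n * (\<beta> * (real S)^2 / sqrt N)" for k :: "(nat \<times> nat) option"
  define MB where "MB = real n * (\<beta> * sqrt q * real S)"
  define MC where "MC = real n * (\<beta>\<^sup>2 / 2 * \<bar>p - q\<bar> * (real S)^2)"
  have Npos: "0 < real N" using N1 by simp
  have sq: "0 \<le> sqrt q" using pb by simp
  have sb: "\<And>\<sigma>s l j. \<sigma>s \<in> P \<Longrightarrow> l \<in> {1..n} \<Longrightarrow> j \<in> {1..N} \<Longrightarrow> \<bar>real_of_int (\<sigma>s l j)\<bar> \<le> real S"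
    unfolding P_def by (rule spin_bound)
  interpret interp I "K1i N" None P f "E0i \<beta> D h N n" "Ai \<beta> N n" "Bi \<beta> q N n" "Ci \<beta> p q N n" MA MB MC
  proof
    show "finite I" unfolding I_def using finite_pairs by simp
    show "K1i N \<subseteq> I" unfolding K1i_def I_def pairs_def by auto
    show "None \<in> I" unfolding I_def by simp
    show "None \<notin> K1i N" unfolding K1i_def by auto
    show "finite P" unfolding P_def by (rule replicas_finite)
    show "P \<noteq> {}" unfolding P_def by (rule replicas_ne)
    show "0 \<le> f s" if "s \<in> P" for s using assms(10) that unfolding P_def by blast
    show "(\<lambda>g. E0i \<beta> D h N n g s) \<in> borel_measurable (Om I)" for s
      unfolding E0i_def by measurable
    show "E0i \<beta> D h N n (g(k:=y)) s = E0i \<beta> D h N n g s" if k: "k \<in> insert None (K1i N)" for g k y s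
    proof -
      have "(\<Sum>(i, j)\<in>pairs (N - 1). (g(k:=y)) (Some (i, j)) * s l i * s l j) =
            (\<Sum>(i, j)\<in>pairs (N - 1). g (Some (i, j)) * s l i * s l j)" for l
      proof (intro sum.cong refl)
        fix x assume x: "x \<in> pairs (N - 1)"
        obtain i j where ij: "x = (i, j)" by force
        have "j < N" using x ij N1 by (auto simp: pairs_def)
        then have "Some (i, j) \<noteq> k" using k by (auto simp: K1i_def)
        then show "(case x of (i, j) \<Rightarrow> (g(k:=y)) (Some (i, j)) * s l i * s l j) =
                   (case x of (i, j) \<Rightarrow> g (Some (i, j)) * s l i * s l j)" using ij by simp
      qed
      then show ?thesis unfolding E0i_def by simp
    qed
    show "\<bar>Ai \<beta> N n k s\<bar> \<le> MA k" if k: "k \<in> K1i N" and s: "s \<in> P" for k s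
    proof -
      obtain i where i: "k = Some (i, N)" "i \<in> {1..<N}" using k by (auto simp: K1i_def)
      have "\<bar>\<Sum>l\<in>{1..n}. (\<beta> / sqrt N) * s l N * s l i\<bar> \<le> real n * (\<beta> * (real S)^2 / sqrt N)"
      proof (rule sum_bound_n)
        fix l assume l: "l \<in> {1..n}"
        have a1: "\<bar>real_of_int (s l N)\<bar> \<le> real S" using sb[OF s l] N1 by auto
        have a2: "\<bar>real_of_int (s l i)\<bar> \<le> real S" using sb[OF s l] i by auto
        have "\<bar>real_of_int (s l N)\<bar> * \<bar>real_of_int (s l i)\<bar> \<le> real S * real S"
          using a1 a2 by (intro mult_mono) auto
        then have "(\<beta> / sqrt N) * (\<bar>real_of_int (s l N)\<bar> * \<bar>real_of_int (s l i)\<bar>) \<le> (\<beta> / sqrt N) * (real S * real S)"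
          using b0 by (intro mult_left_mono) auto
        then show "\<bar>(\<beta> / sqrt N) * s l N * s l i\<bar> \<le> \<beta> * (real S)^2 / sqrt N"
          using b0 by (simp add: abs_mult power2_eq_square mult_ac)
      qed
      then show ?thesis unfolding Ai_def MA_def i by simp
    qed
    show "\<bar>Bi \<beta> q N n s\<bar> \<le> MB" if s: "s \<in> P" for s
      unfolding Bi_def MB_def
    proof (rule sum_bound_n)
      fix l assume l: "l \<in> {1..n}"
      have a1: "\<bar>real_of_int (s l N)\<bar> \<le> real S" using sb[OF s l] N1 by auto
      have "(\<beta> * sqrt q) * \<bar>real_of_int (s l N)\<bar> \<le> (\<beta> * sqrt q) * real S"
        using a1 b0 sq by (intro mult_left_mono) auto
      then show "\<bar>\<beta> * sqrt q * s l N\<bar> \<le> \<beta> * sqrt q * real S"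
        using b0 sq by (simp add: abs_mult)
    qed
    show "\<bar>Ci \<beta> p q N n s\<bar> \<le> MC" if s: "s \<in> P" for s
      unfolding Ci_def MC_def
    proof (rule sum_bound_n)
      fix l assume l: "l \<in> {1..n}"
      have a1: "\<bar>real_of_int (s l N)\<bar> \<le> real S" using sb[OF s l] N1 by auto
      then have "(real_of_int (s l N))\<^sup>2 \<le> (real S)\<^sup>2" by (metis abs_ge_zero power2_abs power_mono)
      then have "(\<beta>\<^sup>2 / 2 * \<bar>p - q\<bar>) * (real_of_int (s l N))\<^sup>2 \<le> (\<beta>\<^sup>2 / 2 * \<bar>p - q\<bar>) * (real S)\<^sup>2"
        by (intro mult_left_mono) auto
      then show "\<bar>\<beta>\<^sup>2 / 2 * (p - q) * (s l N)\<^sup>2\<bar> \<le> \<beta>\<^sup>2 / 2 * \<bar>p - q\<bar> * (real S)\<^sup>2"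
        by (simp add: abs_mult)
    qed
  qed
  have nu_u: "nu_t S \<beta> D h p q N x n f = u x" for x
  proof -
    have "gibbs_avg (configs S N) (H_t \<beta> D h p q N x g) n f = Phi x g" for g
    proof -
      have fc: "finite (configs S N)" unfolding configs_def spins_def by (intro finite_PiE) auto
      have "(\<lambda>\<sigma>s. \<Sum>l\<in>{1..n}. H_t \<beta> D h p q N x g (\<sigma>s l)) = En x g"
        by (rule ext) (simp only: Hsum En_def)
      then show ?thesis
        unfolding gibbs_gav[OF fc] Phi_def by (simp add: P_def replicas_def)
    qed
    then show ?thesis unfolding nu_t_def u_def by (simp add: disorder_def I_def)
  qed
  have KcX: "Kc \<le> 6 * (real n)\<^sup>2 * \<beta>\<^sup>2 * (real S)^4"
  proof -
    define X where "X = (real n)\<^sup>2 * \<beta>\<^sup>2 * (real S)^4"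
    have X0: "0 \<le> X" unfolding X_def by simp
    have inj: "inj_on (\<lambda>i. Some (i, N)) {1..<N}" by (auto simp: inj_on_def)
    have cK: "card (K1i N) = N - 1" unfolding K1i_def using card_image[OF inj] by simp
    have MAsq: "(MA k)^2 = X / real N" for k
      unfolding MA_def X_def using Npos by (simp add: power2_eq_square power4_eq_xxxx field_simps)
    have a: "(\<Sum>k\<in>K1i N. (MA k)^2) \<le> X"
    proof -
      have "(\<Sum>k\<in>K1i N. (MA k)^2) = real (N - 1) * (X / real N)" by (simp add: MAsq cK)
      also have "\<dots> \<le> real N * (X / real N)" using X0 Npos by (intro mult_right_mono) auto
      also have "\<dots> = X" using Npos by simp
      finally show ?thesis .
    qed
    have b: "MB^2 \<le> X"
    proof -
      have "MB^2 = (real n)\<^sup>2 * \<beta>\<^sup>2 * q * (real S)^2" unfolding MB_def using pb by (simp add: power_mult_distrib)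
      also have "\<dots> \<le> (real n)\<^sup>2 * \<beta>\<^sup>2 * (real S)^2 * (real S)^2"
        using pb by (intro mult_right_mono mult_left_mono) auto
      also have "\<dots> = X" unfolding X_def by (simp add: power2_eq_square power4_eq_xxxx mult_ac)
      finally show ?thesis .
    qed
    have c: "2 * MC \<le> X"
    proof -
      have pq: "\<bar>p - q\<bar> \<le> (real S)^2" using pb by linarith
      have nn: "real n \<le> (real n)^2" using n1 by (simp add: power2_eq_square)
      have "2 * MC = real n * \<beta>\<^sup>2 * \<bar>p - q\<bar> * (real S)^2" unfolding MC_def by simp
      also have "\<dots> \<le> real n * \<beta>\<^sup>2 * (real S)^2 * (real S)^2"
        using pq by (intro mult_right_mono mult_left_mono) auto
      also have "\<dots> \<le> (real n)^2 * \<beta>\<^sup>2 * (real S)^2 * (real S)^2"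
        using nn by (intro mult_right_mono) auto
      also have "\<dots> = X" unfolding X_def by (simp add: power2_eq_square power4_eq_xxxx mult_ac)
      finally show ?thesis .
    qed
    have "Kc \<le> X / 2 + 2 * X + X" unfolding Kc_def using a b c by linarith
    also have "\<dots> \<le> 6 * X" using X0 by simp
    finally show ?thesis unfolding X_def by simp
  qed
  have "u t \<le> exp (Kc * (1 - t)) * u 1" by (rule u_bound[OF t0 t1])
  also have "\<dots> \<le> exp (6 * (real n)\<^sup>2 * \<beta>\<^sup>2 * (real S)^4) * u 1"
  proof (rule mult_right_mono[OF _ u_nn])
    have "Kc * (1 - t) \<le> Kc" using Kc_nn t0 t1 by (simp add: mult_left_le)
    then show "exp (Kc * (1 - t)) \<le> exp (6 * (real n)\<^sup>2 * \<beta>\<^sup>2 * (real S)^4)" using KcX by simp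
  qed
  finally show ?thesis unfolding nu_u .
qed


end
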